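(* Let $\mathcal{C}$ be the set of centrally symmetric, strictly convex, $C^2$ smooth closed planar curves for which the Birkhoff billiard map has a rotational invariant curve of $4$-periodic orbits (with rotation number $1/4$), and for such a curve let $h$ denote its support function with respect to its center of symmetry. Then \[\mathcal{C}=\Big\{\gamma\ :\ h^2(\psi)=c_0+\sum_{n\in 2+4\mathbb{Z}}c_ne^{in\psi},\ h+h''>0\Big\}.\] More precisely, given a $C^2$ function $h:[0,2\pi]\to\mathbb{R}$ (2$\pi$-periodic) such that $h^2(\psi)=c_0+\sum_{n\in 2+4\mathbb{Z}}c_ne^{in\psi}$ and $h+h''>0$, there exists a curve $\gamma\in\mathcal{C}$ whose support function is $h$.
   Context: The support function of a convex curve $\gamma$ with respect to the origin is $h(\psi)=\max_{X\in\gamma}\langle X,(\cos\psi,\sin\psi)\rangle$; $h(\psi)+h''(\psi)$ is the radius of curvature of $\gamma$ at the point with outer normal angle $\psi$. The Birkhoff billiard map acts on oriented lines meeting $\gamma$ by reflection at the next intersection point (angle of incidence equals angle of reflection). *)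

theory Defs
  imports "HOL-Analysis.Analysis"
begin

text \<open>A support function h (normal angle psi) of a curve with
  positive curvature determines the boundary point with outer normal cis psi:
  X(psi) = (h psi + i h'(psi)) * cis psi.\<close>

definition C2_fun :: "(real \<Rightarrow> real) \<Rightarrow> bool" where
  "C2_fun h \<longleftrightarrow> (\<forall>x. h differentiable (at x)) \<and> (\<forall>x. deriv h differentiable (at x))
     \<and> continuous_on UNIV (deriv (deriv h))"

definition periodic_2pi :: "(real \<Rightarrow> real) \<Rightarrow> bool" where
  "periodic_2pi h \<longleftrightarrow> (\<forall>x. h (x + 2 * pi) = h x)"

definition bpoint :: "(real \<Rightarrow> real) \<Rightarrow> real \<Rightarrow> complex" where
  "bpoint h psi = (complex_of_real (h psi) + \<i> * complex_of_real (deriv h psi)) * cis psi"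

text \<open>Reflection law at the vertex bpoint h b, between the chords to bpoint h a and
  bpoint h c: the sum of the two unit chord directions is orthogonal to the tangent
  i * cis b (angle of incidence = angle of reflection).\<close>
definition reflects :: "(real \<Rightarrow> real) \<Rightarrow> real \<Rightarrow> real \<Rightarrow> real \<Rightarrow> bool" where
  "reflects h a b c \<longleftrightarrow>
     (let p = bpoint h b; e1 = sgn (bpoint h a - p); e2 = sgn (bpoint h c - p)
      in Re ((e1 + e2) * cnj (\<i> * cis b)) = 0)"

text \<open>Rotational invariant curve of 4-periodic billiard orbits with rotation number 1/4:
  the invariant curve is the graph over the boundary of the chord direction from
  bpoint h psi to bpoint h (F psi); F is the (lift of the) induced circle map.\<close>
definition has_rot_inv_curve_4 :: "(real \<Rightarrow> real) \<Rightarrow> bool" where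
  "has_rot_inv_curve_4 h \<longleftrightarrow> (\<exists>F :: real \<Rightarrow> real.
      continuous_on UNIV F \<and>
      (\<forall>psi. F (psi + 2 * pi) = F psi + 2 * pi) \<and>
      (\<forall>psi. psi < F psi \<and> F psi < psi + 2 * pi) \<and>
      (\<forall>psi. (F ^^ 4) psi = psi + 2 * pi) \<and>
      (\<forall>psi. reflects h psi (F psi) (F (F psi))))"

definition fourier_cond :: "(real \<Rightarrow> real) \<Rightarrow> bool" where
  "fourier_cond h \<longleftrightarrow> (\<exists>(c0::complex) (c::int \<Rightarrow> complex). \<forall>psi.
      ((\<lambda>n. c n * cis (of_int n * psi)) has_sum (complex_of_real ((h psi)\<^sup>2) - c0))
        {n::int. n mod 4 = 2})"

end

theory Submission
  imports Defs
begin


lemma alg_key: "(p - r)^2 * ((p + r)^2 + (q + s)^2) - (p + r)^2 * ((p - r)^2 + (q - s)^2)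
   = 4 * (p * s - q * r) * (p * q - r * s)" for p q r s :: real
  by (simp add: algebra_simps power2_eq_square)

lemma alg1:
  fixes p q r s :: real
  assumes "(p - r) * sqrt ((p + r)^2 + (q + s)^2) = (p + r) * sqrt ((p - r)^2 + (q - s)^2)"
    and "p * s - q * r \<noteq> 0"
  shows "p * q = r * s"
proof -
  have "((p - r) * sqrt ((p + r)^2 + (q + s)^2))^2 = ((p + r) * sqrt ((p - r)^2 + (q - s)^2))^2"
    using assms(1) by simp
  then have "(p - r)^2 * ((p + r)^2 + (q + s)^2) = (p + r)^2 * ((p - r)^2 + (q - s)^2)"
    by (simp add: power_mult_distrib)
  then have "4 * (p * s - q * r) * (p * q - r * s) = 0" using alg_key[of p r q s] by simp
  then show ?thesis using assms(2) by simp
qed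

lemma alg2:
  fixes p q r s :: real
  assumes "p * q = r * s" "p - r > 0" "p + r > 0"
  shows "(p - r) * sqrt ((p + r)^2 + (q + s)^2) = (p + r) * sqrt ((p - r)^2 + (q - s)^2)"
proof -
  have e: "(p - r)^2 * ((p + r)^2 + (q + s)^2) = (p + r)^2 * ((p - r)^2 + (q - s)^2)"
    using alg_key[of p r q s] assms(1) by simp
  have "(p - r) * sqrt ((p + r)^2 + (q + s)^2) = sqrt ((p - r)^2 * ((p + r)^2 + (q + s)^2))"
    using assms(2) by (simp add: real_sqrt_mult)
  also have "\<dots> = sqrt ((p + r)^2 * ((p - r)^2 + (q - s)^2))" using e by simp
  also have "\<dots> = (p + r) * sqrt ((p - r)^2 + (q - s)^2)"
    using assms(3) by (simp add: real_sqrt_mult)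
  finally show ?thesis .
qed

lemma binet_cauchy2:
  fixes Q1 Q2 P1 P2 ca sa cb sb :: real
  shows "(Q1 * ca + Q2 * sa) * (P1 * cb + P2 * sb) - (P1 * ca + P2 * sa) * (Q1 * cb + Q2 * sb)
     = (Q1 * P2 - P1 * Q2) * (ca * sb - sa * cb)"
  by (simp add: algebra_simps)

lemma perp_alg:
  fixes P1 P2 Q1 Q2 A1 A2 B1 B2 d1 d2 :: real
  assumes d1: "d1 = sqrt ((P1 - Q1)^2 + (P2 - Q2)^2)" and d2: "d2 = sqrt ((P1 + Q1)^2 + (P2 + Q2)^2)"
    and pos: "d1 > 0" "d2 > 0"
    and cr: "P1 * Q2 - P2 * Q1 \<noteq> 0"
    and R1: "B1 * ((P1 - Q1) / d1 - (P1 + Q1) / d2) + B2 * ((P2 - Q2) / d1 - (P2 + Q2) / d2) = 0"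
    and R2: "A1 * (- (P1 + Q1) / d2 - (P1 - Q1) / d1) + A2 * (- (P2 + Q2) / d2 - (P2 - Q2) / d1) = 0"
  shows "A1 * B1 + A2 * B2 = 0"
proof -
  define u1 where "u1 = (P1 - Q1) / d1"
  define u2 where "u2 = (P2 - Q2) / d1"
  define v1 where "v1 = - (P1 + Q1) / d2"
  define v2 where "v2 = - (P2 + Q2) / d2"
  have nu: "u1^2 + u2^2 = 1"
  proof -
    have A: "d1^2 = (P1 - Q1)^2 + (P2 - Q2)^2" using d1 by simp
    have B: "u1^2 + u2^2 = ((P1 - Q1)^2 + (P2 - Q2)^2) / d1^2"
      unfolding u1_def u2_def by (simp add: power_divide add_divide_distrib)
    show ?thesis using B unfolding A[symmetric] using pos by simp
  qed
  have nv: "v1^2 + v2^2 = 1"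
  proof -
    have A: "d2^2 = (P1 + Q1)^2 + (P2 + Q2)^2" using d2 by simp
    have B: "v1^2 + v2^2 = ((P1 + Q1)^2 + (P2 + Q2)^2) / d2^2"
      unfolding v1_def v2_def by (simp add: power_divide add_divide_distrib power2_eq_square algebra_simps)
    show ?thesis using B unfolding A[symmetric] using pos by simp
  qed
  define w1 where "w1 = u1 + v1"
  define w2 where "w2 = u2 + v2"
  define z1 where "z1 = u1 - v1"
  define z2 where "z2 = u2 - v2"
  have o: "w1 * z1 + w2 * z2 = 0" using nu nv unfolding w1_def w2_def z1_def z2_def
    by (simp add: algebra_simps power2_eq_square)
  have b: "B1 * w1 + B2 * w2 = 0" using R1 pos unfolding w1_def w2_def u1_def u2_def v1_def v2_def
    by (simp add: field_simps)
  have a: "A1 * z1 + A2 * z2 = 0" using R2 pos unfolding z1_def z2_def u1_def u2_def v1_def v2_def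
    by (simp add: field_simps)
  have wne: "w1^2 + w2^2 \<noteq> 0"
  proof
    assume "w1^2 + w2^2 = 0"
    then have "w1 = 0" "w2 = 0" by (simp_all add: sum_power2_eq_zero_iff)
    then have e1: "(d2 - d1) * P1 = (d1 + d2) * Q1" and e2: "(d2 - d1) * P2 = (d1 + d2) * Q2"
      using pos unfolding w1_def w2_def u1_def u2_def v1_def v2_def
      by (simp_all add: field_simps)
    have "(d1 + d2) * (P1 * Q2 - P2 * Q1) = P1 * ((d1 + d2) * Q2) - P2 * ((d1 + d2) * Q1)"
      by (simp add: algebra_simps)
    also have "\<dots> = 0" unfolding e1[symmetric] e2[symmetric] by (simp add: algebra_simps)
    finally show False using pos cr by simp
  qed
  have zne: "z1^2 + z2^2 \<noteq> 0"
  proof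
    assume "z1^2 + z2^2 = 0"
    then have "z1 = 0" "z2 = 0" by (simp_all add: sum_power2_eq_zero_iff)
    then have e1: "(d1 + d2) * P1 = (d2 - d1) * Q1" and e2: "(d1 + d2) * P2 = (d2 - d1) * Q2"
      using pos unfolding z1_def z2_def u1_def u2_def v1_def v2_def
      by (simp_all add: field_simps)
    have "(d1 + d2) * (P1 * Q2 - P2 * Q1) = ((d1 + d2) * P1) * Q2 - ((d1 + d2) * P2) * Q1"
      by (simp add: algebra_simps)
    also have "\<dots> = 0" unfolding e1 e2 by (simp add: algebra_simps)
    finally show False using pos cr by simp
  qed
  have id1: "(B1 * z2 - B2 * z1) * (w1^2 + w2^2) = (w1 * B1 + w2 * B2) * (w1 * z2 - w2 * z1) - (w1 * z1 + w2 * z2) * (w1 * B2 - w2 * B1)"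
    by (simp add: algebra_simps power2_eq_square)
  have "(B1 * z2 - B2 * z1) * (w1^2 + w2^2) = 0" using id1 o b by (simp add: algebra_simps)
  then have c0: "B1 * z2 - B2 * z1 = 0" using wne mult_eq_0_iff by blast
  have id2: "(A1 * B1 + A2 * B2) * (z1^2 + z2^2) = (A1 * z1 + A2 * z2) * (B1 * z1 + B2 * z2) + (A1 * z2 - A2 * z1) * (B1 * z2 - B2 * z1)"
    by (simp add: algebra_simps power2_eq_square)
  have "(A1 * B1 + A2 * B2) * (z1^2 + z2^2) = 0" using id2 a c0 by simp
  then show ?thesis using zne mult_eq_0_iff by blast
qed




locale bill =
  fixes h :: "real \<Rightarrow> real"
  assumes C2: "C2_fun h" and per: "periodic_2pi h"
    and pos: "\<And>psi. h psi + deriv (deriv h) psi > 0"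
begin

definition "hh1 = deriv h"
definition "hh2 = deriv hh1"
definition "kap t = h t + hh2 t"

lemma h_deriv: "(h has_real_derivative hh1 t) (at t)"
  using C2 unfolding C2_fun_def hh1_def by (simp add: DERIV_deriv_iff_real_differentiable)

lemma hh1_deriv: "(hh1 has_real_derivative hh2 t) (at t)"
  using C2 unfolding C2_fun_def hh1_def hh2_def by (simp add: DERIV_deriv_iff_real_differentiable)

lemma hh2_cont: "continuous_on UNIV hh2"
  using C2 unfolding C2_fun_def hh1_def hh2_def by simp

lemma hh2_isCont: "isCont hh2 t"
  using hh2_cont by (simp add: continuous_on_eq_continuous_at)

lemma h_isCont: "isCont h t"
  using h_deriv DERIV_isCont by blast

lemma hh1_isCont: "isCont hh1 t"
  using hh1_deriv DERIV_isCont by blast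

lemma kap_pos: "kap t > 0"
  using pos[of t] unfolding kap_def hh2_def hh1_def by simp

lemma kap_isCont: "isCont kap t"
  unfolding kap_def[abs_def] by (intro continuous_intros h_isCont hh2_isCont)

lemma h_per: "h (t + 2*pi) = h t"
  using per unfolding periodic_2pi_def by simp

lemma deriv_shift_eq:
  assumes "\<And>t. (f has_real_derivative f' t) (at t)" and "\<And>t. f (t + c) = f t"
  shows "f' (t + c) = f' t"
proof -
  have "((\<lambda>s. f (s + c)) has_real_derivative f' (t + c) * 1) (at t)"
    by (rule DERIV_chain2[OF assms(1)]) (auto intro!: derivative_eq_intros)
  then have "(f has_real_derivative f' (t + c)) (at t)" using assms(2) by simp
  then show ?thesis using assms(1) DERIV_unique by blast
qed

lemma hh1_per: "hh1 (t + 2*pi) = hh1 t"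
  by (rule deriv_shift_eq[OF h_deriv h_per])

lemma hh2_per: "hh2 (t + 2*pi) = hh2 t"
  by (rule deriv_shift_eq[OF hh1_deriv hh1_per])

lemma kap_per: "kap (t + 2*pi) = kap t"
  unfolding kap_def by (simp add: h_per hh2_per)

definition "xx t = h t * cos t - hh1 t * sin t"
definition "yy t = h t * sin t + hh1 t * cos t"

lemma xx_deriv: "(xx has_real_derivative - (kap t * sin t)) (at t)"
  unfolding xx_def[abs_def]
  by (rule derivative_eq_intros h_deriv hh1_deriv refl | simp add: kap_def algebra_simps)+

lemma yy_deriv: "(yy has_real_derivative (kap t * cos t)) (at t)"
  unfolding yy_def[abs_def]
  by (rule derivative_eq_intros h_deriv hh1_deriv refl | simp add: kap_def algebra_simps)+

lemma xx_isCont: "isCont xx t" using xx_deriv DERIV_isCont by blast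
lemma yy_isCont: "isCont yy t" using yy_deriv DERIV_isCont by blast

lemma xx_per: "xx (t + 2*pi) = xx t" unfolding xx_def by (simp add: h_per hh1_per)
lemma yy_per: "yy (t + 2*pi) = yy t" unfolding yy_def by (simp add: h_per hh1_per)

lemma bpoint_eq: "bpoint h t = Complex (xx t) (yy t)"
  unfolding bpoint_def xx_def yy_def hh1_def
  by (simp add: complex_eq_iff cis.sel)

definition "supp s t = xx t * cos s + yy t * sin s"
definition "tsupp s t = - xx t * sin s + yy t * cos s"

lemma supp_alt: "supp s t = h t * cos (t - s) - hh1 t * sin (t - s)"
  unfolding supp_def xx_def yy_def cos_diff sin_diff by (simp add: algebra_simps)

lemma tsupp_alt: "tsupp s t = h t * sin (t - s) + hh1 t * cos (t - s)"
  unfolding tsupp_def xx_def yy_def cos_diff sin_diff by (simp add: algebra_simps)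

lemma supp_self: "supp s s = h s" by (simp add: supp_alt)
lemma tsupp_self: "tsupp s s = hh1 s" by (simp add: tsupp_alt)

lemma supp_per: "supp s (t + 2*pi) = supp s t"
  unfolding supp_def by (simp add: xx_per yy_per)

lemma supp_deriv: "((\<lambda>t. supp s t) has_real_derivative - (kap t * sin (t - s))) (at t)"
  unfolding supp_def
  by (rule derivative_eq_intros xx_deriv yy_deriv refl | simp add: sin_diff algebra_simps)+

lemma strict_supp:
  assumes "s < t" "t < s + 2*pi"
  shows "supp s t < h s"
proof (cases "t \<le> s + pi")
  case True
  have "supp s t < supp s s"
  proof (rule DERIV_neg_imp_decreasing_open[OF assms(1)])
    fix x assume "s < x" "x < t"
    then have "sin (x - s) > 0" using True by (intro sin_gt_zero) auto
    then show "\<exists>y. ((\<lambda>t. supp s t) has_real_derivative y) (at x) \<and> y < 0"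
      using supp_deriv kap_pos by (metis mult_pos_pos neg_less_0_iff_less)
  next
    show "continuous_on {s..t} (supp s)"
      using supp_deriv by (intro continuous_at_imp_continuous_on) (metis DERIV_isCont)
  qed
  then show ?thesis by (simp add: supp_self)
next
  case False
  have "supp s t < supp s (s + 2*pi)"
  proof (rule DERIV_pos_imp_increasing_open[OF assms(2)])
    fix x assume "t < x" "x < s + 2*pi"
    then have "sin (x - s) < 0" using False by (intro sin_lt_zero) auto
    then show "\<exists>y. ((\<lambda>t. supp s t) has_real_derivative y) (at x) \<and> y > 0"
      using supp_deriv kap_pos by (metis mult_pos_neg neg_0_less_iff_less)
  next
    show "continuous_on {t..s + 2*pi} (supp s)"
      using supp_deriv by (intro continuous_at_imp_continuous_on) (metis DERIV_isCont)
  qed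
  then show ?thesis by (simp add: supp_per supp_self)
qed

definition "dd a b = sqrt ((xx a - xx b)^2 + (yy a - yy b)^2)"
definition "phi s t = (tsupp s t - tsupp s s) / dd t s"

lemma dd_sym: "dd a b = dd b a"
  unfolding dd_def by (simp add: power2_commute)

lemma dd_nonneg: "dd a b \<ge> 0" unfolding dd_def by simp

lemma dd_per1: "dd (a + 2*pi) b = dd a b" unfolding dd_def by (simp add: xx_per yy_per)
lemma dd_per2: "dd a (b + 2*pi) = dd a b" unfolding dd_def by (simp add: xx_per yy_per)

lemma dd_zero_supp: "dd a b = 0 \<Longrightarrow> supp s a = supp s b"
  unfolding dd_def supp_def by simp

lemma dd_pos: assumes "a < b" "b < a + 2*pi" shows "dd a b > 0"
proof -
  have "supp a b < h a" using strict_supp assms by blast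
  then have "dd a b \<noteq> 0" using dd_zero_supp[of a b a] supp_self by force
  then show ?thesis using dd_nonneg[of a b] by linarith
qed

lemma dd_pos': assumes "b < a" "a < b + 2*pi" shows "dd a b > 0"
  using dd_pos[OF assms] dd_sym by simp

lemma dd_isCont2: "isCont (\<lambda>z. dd (fst z) (snd z)) z"
  unfolding dd_def by (intro continuous_intros isCont_o2[OF _ xx_isCont] isCont_o2[OF _ yy_isCont])

lemma dd_deriv:
  assumes "dd t s > 0"
  shows "((\<lambda>t. dd t s) has_real_derivative - (kap t * phi t s)) (at t)"
proof -
  let ?Q = "\<lambda>t. (xx t - xx s)^2 + (yy t - yy s)^2"
  have Q: "(?Q has_real_derivative 2 * (xx t - xx s) * (- (kap t * sin t)) + 2 * (yy t - yy s) * (kap t * cos t)) (at t)"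
    by (auto intro!: derivative_eq_intros xx_deriv yy_deriv simp: algebra_simps)
  have Qpos: "?Q t > 0" using assms unfolding dd_def by simp
  have "((\<lambda>t. sqrt (?Q t)) has_real_derivative
      inverse (sqrt (?Q t)) / 2 * (2 * (xx t - xx s) * (- (kap t * sin t)) + 2 * (yy t - yy s) * (kap t * cos t))) (at t)"
    by (rule DERIV_chain2[OF DERIV_real_sqrt[OF Qpos] Q])
  moreover have "inverse (sqrt (?Q t)) / 2 * (2 * (xx t - xx s) * (- (kap t * sin t)) + 2 * (yy t - yy s) * (kap t * cos t))
     = - (kap t * phi t s)"
    using Qpos unfolding phi_def tsupp_def dd_sym[of s t] unfolding dd_def
    by (simp add: field_simps divide_simps)
  ultimately show ?thesis unfolding dd_def by simp
qed

lemma lagrange_id: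
  "(sin t * sin s + cos t * cos s) * ((xx t - xx s)^2 + (yy t - yy s)^2)
     + (tsupp s t - tsupp s s) * (tsupp t s - tsupp t t)
   = (supp s t - supp s s) * (supp t t - supp t s)"
  unfolding supp_def tsupp_def by (simp add: algebra_simps power2_eq_square)

lemma tsupp_deriv: "((\<lambda>t. tsupp s t) has_real_derivative kap t * (sin t * sin s + cos t * cos s)) (at t)"
  unfolding tsupp_def
  by (auto intro!: derivative_eq_intros xx_deriv yy_deriv simp: algebra_simps)

lemma phi_deriv:
  assumes "dd t s > 0"
  shows "((\<lambda>t. phi s t) has_real_derivative kap t * (supp s t - h s) * (h t - supp t s) / (dd t s)^3) (at t)"
proof -
  have d: "((\<lambda>t. (tsupp s t - tsupp s s) / dd t s) has_real_derivative
     ((kap t * (sin t * sin s + cos t * cos s)) * dd t s - (tsupp s t - tsupp s s) * (- (kap t * phi t s))) / (dd t s * dd t s)) (at t)"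
    by (rule DERIV_divide) (use assms in \<open>auto intro!: derivative_eq_intros tsupp_deriv dd_deriv\<close>)
  have Q: "(dd t s)^2 = (xx t - xx s)^2 + (yy t - yy s)^2" unfolding dd_def by simp
  have "((kap t * (sin t * sin s + cos t * cos s)) * dd t s - (tsupp s t - tsupp s s) * (- (kap t * phi t s))) / (dd t s * dd t s)
     = kap t * ((sin t * sin s + cos t * cos s) * (dd t s)^2 + (tsupp s t - tsupp s s) * (tsupp t s - tsupp t t)) / (dd t s)^3"
    using assms unfolding phi_def dd_sym[of s t] by (simp add: field_simps power2_eq_square power3_eq_cube less_imp_neq[symmetric])
  also have "\<dots> = kap t * (supp s t - h s) * (h t - supp t s) / (dd t s)^3"
    unfolding Q lagrange_id by (simp add: supp_self)
  finally show ?thesis using d unfolding phi_def[abs_def] by simp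
qed

lemma tsupp_per: "tsupp s (t + 2*pi) = tsupp s t"
  unfolding tsupp_def by (simp add: xx_per yy_per)

lemma supp_per1: "supp (s + 2*pi) t = supp s t" unfolding supp_def by simp
lemma tsupp_per1: "tsupp (s + 2*pi) t = tsupp s t" unfolding tsupp_def by simp

lemma phi_per2: "phi s (t + 2*pi) = phi s t"
  unfolding phi_def by (simp add: tsupp_per dd_per1)

lemma phi_per12: "phi (s + 2*pi) (t + 2*pi) = phi s t"
  unfolding phi_def by (simp add: tsupp_per tsupp_per1 dd_per1 dd_per2)

lemma supp_lt: assumes "t < s" "s < t + 2*pi" shows "supp s t < h s"
  using strict_supp[of s "t + 2*pi"] assms supp_per by simp

lemma phi_deriv_neg:
  assumes "s < t" "t < s + 2*pi"
  shows "((\<lambda>t. phi s t) has_real_derivative kap t * (supp s t - h s) * (h t - supp t s) / (dd t s)^3) (at t)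
     \<and> kap t * (supp s t - h s) * (h t - supp t s) / (dd t s)^3 < 0"
proof
  have D: "dd t s > 0" using dd_pos'[OF assms] .
  then show "((\<lambda>t. phi s t) has_real_derivative kap t * (supp s t - h s) * (h t - supp t s) / (dd t s)^3) (at t)"
    by (rule phi_deriv)
  have "supp s t - h s < 0" using strict_supp[OF assms] by simp
  moreover have "h t - supp t s > 0" using supp_lt[of s t] assms by simp
  ultimately have "kap t * (supp s t - h s) * (h t - supp t s) < 0"
    using kap_pos[of t] by (simp add: mult_pos_neg mult_neg_pos)
  then show "kap t * (supp s t - h s) * (h t - supp t s) / (dd t s)^3 < 0"
    using D by (simp add: divide_neg_pos)
qed

lemma phi_decr:
  assumes "s < t1" "t1 < t2" "t2 < s + 2*pi"
  shows "phi s t2 < phi s t1"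
proof (rule DERIV_neg_imp_decreasing_open[OF assms(2)])
  fix x assume "t1 < x" "x < t2"
  then show "\<exists>y. ((\<lambda>t. phi s t) has_real_derivative y) (at x) \<and> y < 0"
    using phi_deriv_neg[of s x] assms by auto
next
  show "continuous_on {t1..t2} (phi s)"
  proof (intro continuous_at_imp_continuous_on ballI)
    fix x assume "x \<in> {t1..t2}"
    then show "isCont (phi s) x"
      using phi_deriv_neg[of s x] assms DERIV_isCont by auto
  qed
qed

lemma phi_decr_le:
  assumes "s < t1" "t1 \<le> t2" "t2 < s + 2*pi"
  shows "phi s t2 \<le> phi s t1"
  using phi_decr[of s t1 t2] assms by (cases "t1 = t2") auto

lemma reflects_iff: "reflects h a b c \<longleftrightarrow> phi b a + phi b c = 0"
proof -
  have e: "sgn (Complex (xx u) (yy u) - Complex (xx b) (yy b)) = Complex ((xx u - xx b)/dd u b) ((yy u - yy b)/dd u b)" for u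
  proof -
    have eqc: "Complex (xx u) (yy u) - Complex (xx b) (yy b) = Complex (xx u - xx b) (yy u - yy b)"
      by (simp add: complex_eq_iff)
    show ?thesis unfolding eqc sgn_div_norm by (simp add: complex_eq_iff dd_def divide_inverse mult.commute complex_norm)
  qed
  have "Re ((Complex ((xx a - xx b)/dd a b) ((yy a - yy b)/dd a b) + Complex ((xx c - xx b)/dd c b) ((yy c - yy b)/dd c b))
      * cnj (\<i> * cis b)) = phi b a + phi b c"
    unfolding phi_def tsupp_def by (simp add: dd_sym[of b] diff_divide_distrib add_divide_distrib algebra_simps)
  then show ?thesis unfolding reflects_def Let_def bpoint_eq e by simp
qed


lemma rot_inv_aux:
  fixes X Y S C :: real
  shows "(X * C + Y * S)^2 + (- X * S + Y * C)^2 = (X^2 + Y^2) * (S^2 + C^2)"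
  by (simp add: algebra_simps power2_eq_square)

lemma dd_rot: "dd u v = sqrt ((supp c u - supp c v)^2 + (tsupp c u - tsupp c v)^2)"
proof -
  have "(supp c u - supp c v)^2 + (tsupp c u - tsupp c v)^2
      = ((xx u - xx v) * cos c + (yy u - yy v) * sin c)^2 + (- (xx u - xx v) * sin c + (yy u - yy v) * cos c)^2"
    unfolding supp_def tsupp_def by (simp add: algebra_simps)
  also have "\<dots> = (xx u - xx v)^2 + (yy u - yy v)^2"
    unfolding rot_inv_aux by simp
  finally show ?thesis unfolding dd_def by simp
qed

end

locale bill_sym = bill +
  assumes hsym: "\<And>t. h (t + pi) = h t"
begin

lemma hh1_sym: "hh1 (t + pi) = hh1 t" by (rule deriv_shift_eq[OF h_deriv hsym])

lemma xx_sym: "xx (t + pi) = - xx t" unfolding xx_def by (simp add: hsym hh1_sym)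
lemma yy_sym: "yy (t + pi) = - yy t" unfolding yy_def by (simp add: hsym hh1_sym)
lemma xx_msym: "xx (t - pi) = - xx t" using xx_sym[of "t - pi"] by simp
lemma yy_msym: "yy (t - pi) = - yy t" using yy_sym[of "t - pi"] by simp

lemma supp_sym: "supp s (t + pi) = - supp s t" unfolding supp_def by (simp add: xx_sym yy_sym)
lemma tsupp_sym: "tsupp s (t + pi) = - tsupp s t" unfolding tsupp_def by (simp add: xx_sym yy_sym)
lemma supp_msym: "supp s (t - pi) = - supp s t" unfolding supp_def by (simp add: xx_msym yy_msym)
lemma tsupp_msym: "tsupp s (t - pi) = - tsupp s t" unfolding tsupp_def by (simp add: xx_msym yy_msym)

lemma h_pos: "h t > 0"
  using strict_supp[of t "t + pi"] supp_sym[of t t] supp_self[of t] by simp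

lemma dd_shift_both: "dd (a + pi) (b + pi) = dd a b"
  unfolding dd_def xx_sym yy_sym by (simp add: algebra_simps power2_commute)

lemma dd_shift_both_m: "dd (a - pi) (b - pi) = dd a b"
  using dd_shift_both[of "a - pi" "b - pi"] by simp

lemma quarter:
  fixes a :: real
  defines "b \<equiv> a + pi/2"
  shows "phi b a + phi b (a + pi) = 0 \<longleftrightarrow> h a * hh1 a + h b * hh1 b = 0"
proof -
  define p where "p = h a"
  define q where "q = hh1 a"
  define r where "r = - hh1 b"
  define s where "s = h b"
  have ab: "a - b = - (pi/2)" "a + pi - b = pi/2" "b - a = pi/2" unfolding b_def by simp_all
  have t1: "tsupp b a = r - p + tsupp b b"
    unfolding tsupp_alt ab p_def r_def by simp
  have t2: "tsupp b (a + pi) = p + r + tsupp b b"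
    unfolding tsupp_alt ab p_def r_def by (simp add: hsym hh1_sym)
  have sab: "supp a b = r" unfolding supp_alt ab r_def by simp
  have tab: "tsupp a b = s" unfolding tsupp_alt ab s_def by simp
  have D1: "dd a b = sqrt ((p - r)^2 + (q - s)^2)"
    unfolding dd_rot[of a b a] supp_self tsupp_self sab tab p_def q_def ..
  have D2: "dd (a + pi) b = sqrt ((p + r)^2 + (q + s)^2)"
    unfolding dd_rot[of "a + pi" b a] supp_sym tsupp_sym supp_self tsupp_self sab tab p_def q_def
    by (simp add: power2_commute algebra_simps)
  have d1: "dd a b > 0" by (rule dd_pos) (simp_all add: b_def)
  have d2: "dd (a + pi) b > 0" by (rule dd_pos') (simp_all add: b_def)
  have pr1: "p - r > 0" using strict_supp[of a b] sab unfolding p_def by (simp add: b_def)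
  have pr2: "p + r > 0" using strict_supp[of a "b + pi"] supp_sym[of a b] sab unfolding p_def by (simp add: b_def)
  have qs: "supp b a = q" unfolding supp_alt ab q_def by simp
  have qs1: "q < s" using supp_lt[of a b] qs unfolding s_def by (simp add: b_def)
  have qs2: "- q < s" using strict_supp[of b "a + pi"] supp_sym[of b a] qs unfolding s_def by (simp add: b_def)
  have cr: "p * s - q * r \<noteq> 0"
  proof -
    have "\<bar>q * r\<bar> < p * s"
    proof -
      have "\<bar>q\<bar> < s" "\<bar>r\<bar> < p" using qs1 qs2 pr1 pr2 by auto
      then have "\<bar>q\<bar> * \<bar>r\<bar> < s * p"
        by (meson abs_ge_zero le_less_trans mult_strict_mono')
      then show ?thesis by (simp add: abs_mult mult.commute)
    qed
    then show ?thesis by linarith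
  qed
  have phi1: "phi b a = (r - p) / dd a b" unfolding phi_def t1 dd_sym[of a b] by simp
  have phi2: "phi b (a + pi) = (p + r) / dd (a + pi) b" unfolding phi_def t2 dd_sym[of "a + pi" b] by simp
  have "phi b a + phi b (a + pi) = 0 \<longleftrightarrow> (p - r) * dd (a + pi) b = (p + r) * dd a b"
    unfolding phi1 phi2 using d1 d2 by (simp add: field_simps) argo
  also have "\<dots> \<longleftrightarrow> p * q = r * s"
    unfolding D1 D2 using alg1[of p r q s] alg2[of p q r s] cr pr1 pr2 by blast
  also have "\<dots> \<longleftrightarrow> h a * hh1 a + h b * hh1 b = 0"
    unfolding p_def q_def r_def s_def by (simp add: algebra_simps) argo
  finally show ?thesis .
qed


lemma abs_supp_lt:
  assumes "s < t" "t < s + pi"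
  shows "\<bar>supp s t\<bar> < h s"
  using strict_supp[of s t] strict_supp[of s "t + pi"] supp_sym[of s t] assms by auto

lemma abs_supp_lt':
  assumes "t < s" "s < t + pi"
  shows "\<bar>supp s t\<bar> < h s"
  using supp_lt[of t s] strict_supp[of s "t + pi"] supp_sym[of s t] assms by auto

lemma cross_ne:
  assumes "a < b" "b < a + pi"
  shows "xx a * yy b - yy a * xx b \<noteq> 0"
proof
  assume c: "xx a * yy b - yy a * xx b = 0"
  have "supp a b * supp b a - supp a a * supp b b
     = (xx b * yy a - xx a * yy b) * (cos a * sin b - sin a * cos b)"
    unfolding supp_def by (rule binet_cauchy2)
  then have e: "supp a b * supp b a = h a * h b" using c by (simp add: supp_self)
  have "\<bar>supp a b\<bar> < h a" using abs_supp_lt assms by blast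
  moreover have "\<bar>supp b a\<bar> < h b" using abs_supp_lt' assms by blast
  ultimately have "\<bar>supp a b\<bar> * \<bar>supp b a\<bar> < h a * h b"
    by (meson abs_ge_zero le_less_trans mult_strict_mono')
  then show False using e by (simp add: abs_mult[symmetric] h_pos mult_pos_pos)
qed

lemma perp:
  assumes ab: "a < b" "b < a + pi"
    and R1: "phi b a + phi b (a + pi) = 0"
    and R2: "phi a (b - pi) + phi a b = 0"
  shows "b = a + pi/2"
proof -
  define d1 where "d1 = sqrt ((xx a - xx b)^2 + (yy a - yy b)^2)"
  define d2 where "d2 = sqrt ((xx a + xx b)^2 + (yy a + yy b)^2)"
  have dd1: "dd a b = d1" "dd b a = d1" unfolding d1_def using dd_sym[of a b] by (simp_all add: dd_def)
  have dd2: "dd (a + pi) b = d2" "dd (b - pi) a = d2"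
    unfolding d2_def dd_def xx_sym yy_sym xx_msym yy_msym by (simp_all add: power2_commute algebra_simps)
  have pos1: "d1 > 0" using dd_pos[of a b] ab dd1 by simp
  have "dd (a + pi) b > 0" by (rule dd_pos') (use ab in auto)
  then have pos2: "d2 > 0" using dd2 by simp
  have e1: "phi b a = (- sin b * (xx a - xx b) + cos b * (yy a - yy b)) / d1"
    unfolding phi_def tsupp_def dd1 by (simp add: algebra_simps)
  have e2: "phi b (a + pi) = (- sin b * (- xx a - xx b) + cos b * (- yy a - yy b)) / d2"
    unfolding phi_def tsupp_def dd2 xx_sym yy_sym by (simp add: algebra_simps)
  have e3: "phi a (b - pi) = (- sin a * (- xx b - xx a) + cos a * (- yy b - yy a)) / d2"
    unfolding phi_def tsupp_def dd2 xx_msym yy_msym by (simp add: algebra_simps)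
  have e4: "phi a b = (- sin a * (xx b - xx a) + cos a * (yy b - yy a)) / d1"
    unfolding phi_def tsupp_def dd1 by (simp add: algebra_simps)
  have r1: "(- sin b) * ((xx a - xx b) / d1 - (xx a + xx b) / d2) + cos b * ((yy a - yy b) / d1 - (yy a + yy b) / d2) = 0"
  proof -
    have "(- sin b) * ((xx a - xx b) / d1 - (xx a + xx b) / d2) + cos b * ((yy a - yy b) / d1 - (yy a + yy b) / d2)
      = phi b a + phi b (a + pi)" unfolding e1 e2 using pos1 pos2 by (simp add: field_simps)
    then show ?thesis using R1 by simp
  qed
  have r2: "(- sin a) * (- (xx a + xx b) / d2 - (xx a - xx b) / d1) + cos a * (- (yy a + yy b) / d2 - (yy a - yy b) / d1) = 0"
  proof -
    have "(- sin a) * (- (xx a + xx b) / d2 - (xx a - xx b) / d1) + cos a * (- (yy a + yy b) / d2 - (yy a - yy b) / d1)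
      = phi a (b - pi) + phi a b" unfolding e3 e4 using pos1 pos2 by (simp add: field_simps)
    then show ?thesis using R2 by simp
  qed
  have "(- sin a) * (- sin b) + cos a * cos b = 0"
    by (rule perp_alg[OF d1_def d2_def pos1 pos2 _ r1 r2]) (use cross_ne[OF ab] in \<open>simp add: algebra_simps\<close>)
  then have "cos (b - a) = 0" by (simp add: cos_diff algebra_simps)
  then have "b - a = pi/2" using cos_inj_pi[of "b - a" "pi/2"] ab by simp
  then show ?thesis by simp
qed

theorem rot_curve_of_cond:
  assumes "\<And>a. h a * hh1 a + h (a + pi/2) * hh1 (a + pi/2) = 0"
  shows "has_rot_inv_curve_4 h"
  unfolding has_rot_inv_curve_4_def
proof (intro exI[of _ "\<lambda>psi. psi + pi/2"] conjI allI)
  show "continuous_on UNIV (\<lambda>psi::real. psi + pi / 2)" by (intro continuous_intros)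
  fix psi :: real
  show "psi + 2 * pi + pi / 2 = psi + pi / 2 + 2 * pi" by simp
  show "psi < psi + pi/2" by simp
  show "psi + pi/2 < psi + 2 * pi" by simp
  show "((\<lambda>psi. psi + pi / 2) ^^ 4) psi = psi + 2 * pi"
    by (simp add: numeral_eq_Suc)
  have q: "phi (psi + pi/2) psi + phi (psi + pi/2) (psi + pi) = 0"
    using quarter[of psi] assms[of psi] by simp
  have e: "psi + pi / 2 + pi / 2 = psi + pi" by simp
  show "reflects h psi (psi + pi / 2) (psi + pi / 2 + pi / 2)"
    unfolding reflects_iff e by (rule q)
qed

end



locale bill_F = bill_sym +
  fixes F :: "real \<Rightarrow> real"
  assumes Fcont: "continuous_on UNIV F"
    and Fper: "\<And>psi. F (psi + 2*pi) = F psi + 2*pi"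
    and Fgt: "\<And>psi. psi < F psi" and Flt: "\<And>psi. F psi < psi + 2*pi"
    and F4: "\<And>psi. (F ^^ 4) psi = psi + 2*pi"
    and Frefl: "\<And>psi. reflects h psi (F psi) (F (F psi))"
begin

lemma F4': "F (F (F (F psi))) = psi + 2*pi"
  using F4[of psi] by (simp add: numeral_eq_Suc)

lemma F_isCont: "isCont F x"
  using Fcont by (simp add: continuous_on_eq_continuous_at)

lemma Fper_m: "F (psi - 2*pi) = F psi - 2*pi"
proof -
  have "F (psi - 2*pi + 2*pi) = F (psi - 2*pi) + 2*pi" by (rule Fper)
  then show ?thesis by (metis add_diff_cancel_right' diff_add_cancel)
qed

lemma F_inj: assumes "F x = F y" shows "x = y"
proof -
  have "x + 2*pi = F (F (F (F x)))" by (simp only: F4')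
  also have "\<dots> = F (F (F (F y)))" by (simp only: assms)
  also have "\<dots> = y + 2*pi" by (simp only: F4')
  finally show ?thesis by simp
qed

lemma F_mono: assumes "x < y" shows "F x < F y"
proof -
  have "(F x < F y \<and> F y < F (y + 2*pi)) \<or> (F (y + 2*pi) < F y \<and> F y < F x)"
  proof (rule continuous_inj_imp_mono[OF assms])
    show "y < y + 2*pi" by simp
    show "continuous_on {x..y + 2 * pi} F" using Fcont continuous_on_subset by blast
    show "inj_on F {x..y + 2 * pi}" by (meson F_inj inj_onI)
  qed
  then show ?thesis using Fper[of y] by auto
qed

lemma F_less_iff: "F x < F y \<longleftrightarrow> x < y"
proof
  assume a: "F x < F y"
  show "x < y"
  proof (rule ccontr)
    assume "\<not> x < y"
    then have "y < x \<or> y = x" by auto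
    then have "F y \<le> F x" using F_mono by (auto simp: less_imp_le)
    then show False using a by simp
  qed
next
  assume "x < y" then show "F x < F y" by (rule F_mono)
qed

lemma F_le_iff: "F x \<le> F y \<longleftrightarrow> x \<le> y"
  using F_less_iff[of y x] by linarith

definition "Finv x = F (F (F x)) - 2*pi"

lemma F_Finv: "F (Finv x) = x"
  unfolding Finv_def using Fper_m F4' by simp

lemma Finv_F: "Finv (F x) = x"
  unfolding Finv_def using F4' by simp

lemma Finv_lt: "Finv x < x" using Fgt[of "Finv x"] F_Finv by simp
lemma Finv_gt: "x - 2*pi < Finv x" using Flt[of "Finv x"] F_Finv by simp

lemma Finv_isCont: "isCont Finv x"
  unfolding Finv_def[abs_def] by (intro continuous_intros isCont_o2[OF _ F_isCont] F_isCont)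

lemma Finv_per: "Finv (x + 2*pi) = Finv x + 2*pi"
  unfolding Finv_def by (simp add: Fper)

lemma refl_at: "phi b (Finv b) + phi b (F b) = 0"
  using Frefl[of "Finv b"] unfolding reflects_iff F_Finv .

lemma phi_isCont_comp:
  fixes f g :: "'a::real_normed_vector \<Rightarrow> real"
  assumes "isCont f x" "isCont g x" "dd (g x) (f x) \<noteq> 0"
  shows "isCont (\<lambda>x. phi (f x) (g x)) x"
proof -
  have d: "isCont (\<lambda>x. dd (g x) (f x)) x"
    using isCont_o2[OF isCont_Pair[OF assms(2) assms(1)] dd_isCont2] by simp
  show ?thesis unfolding phi_def[abs_def] tsupp_def
    by (intro continuous_intros isCont_o2[OF _ xx_isCont] isCont_o2[OF _ yy_isCont] assms d)
qed

definition "pp b = - kap b * phi b (Finv b)"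

lemma pp_alt: "pp b = kap b * phi b (F b)"
proof -
  have "phi b (Finv b) = - phi b (F b)" using refl_at[of b] by linarith
  then show ?thesis unfolding pp_def by simp
qed

lemma dd_Finv_pos: "dd (Finv b) b > 0"
  using dd_pos[of "Finv b" b] Finv_lt[of b] Finv_gt[of b] by simp

lemma pp_isCont: "isCont pp x"
  unfolding pp_def[abs_def]
  by (intro continuous_intros kap_isCont phi_isCont_comp Finv_isCont) (use dd_Finv_pos[of x] in simp)

lemma pp_per: "pp (x + 2*pi) = pp x"
  unfolding pp_def by (simp add: Finv_per phi_per12 kap_per)

lemma exists_u: "\<exists>U. \<forall>x. (U has_real_derivative pp x) (at x)"
proof -
  have "\<exists>U. \<forall>x::real. -\<infinity> < ereal x \<longrightarrow> ereal x < \<infinity> \<longrightarrow> (U has_vector_derivative pp x) (at x)"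
    by (rule einterval_antiderivative) (auto intro: pp_isCont)
  then show ?thesis by (auto simp: has_real_derivative_iff_has_vector_derivative)
qed

definition "uu = (SOME U. \<forall>x. (U has_real_derivative pp x) (at x))"

lemma uu_deriv: "(uu has_real_derivative pp x) (at x)"
  using someI_ex[OF exists_u] unfolding uu_def by blast

definition "Phi a b = dd b a - uu b + uu a"

lemma Phi_deriv2:
  assumes "a < t" "t < a + 2*pi"
  shows "((\<lambda>t. Phi a t) has_real_derivative - kap t * (phi t a - phi t (Finv t))) (at t)"
proof -
  have "dd t a > 0" using dd_pos' assms by simp
  then have "((\<lambda>t. dd t a - uu t + uu a) has_real_derivative - (kap t * phi t a) - pp t + 0) (at t)"
    by (intro derivative_intros dd_deriv uu_deriv)
  then show ?thesis unfolding Phi_def[abs_def] pp_def by (simp add: algebra_simps)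
qed

lemma Phi_deriv1:
  assumes "t < b" "b < t + 2*pi"
  shows "((\<lambda>t. Phi t b) has_real_derivative - kap t * (phi t b - phi t (F t))) (at t)"
proof -
  have "dd t b > 0" using dd_pos assms by simp
  then have "((\<lambda>t. dd t b - uu b + uu t) has_real_derivative - (kap t * phi t b) - 0 + pp t) (at t)"
    by (intro derivative_intros dd_deriv uu_deriv)
  then show ?thesis unfolding Phi_def[abs_def] pp_alt dd_sym[of b] by (simp add: algebra_simps)
qed

lemma Phi_max:
  assumes "a < b" "b < a + 2*pi" "b \<noteq> F a"
  shows "Phi a b < Phi a (F a)"
proof (cases "b < F a")
  case True
  show ?thesis
  proof (rule DERIV_pos_imp_increasing_open[OF True])
    fix t assume t: "b < t" "t < F a"
    have t2: "a < t" "t < a + 2*pi" using t assms Flt[of a] by auto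
    have "F (Finv t) < F a" using t(2) F_Finv[of t] by simp
    then have "Finv t < a" by (simp only: F_less_iff)
    then have "phi t (a + 2*pi) < phi t (Finv t + 2*pi)"
      using phi_decr[of t "Finv t + 2*pi" "a + 2*pi"] Finv_gt[of t] t2 by simp
    then have "- kap t * (phi t a - phi t (Finv t)) > 0"
      using kap_pos[of t] by (simp add: phi_per2 mult_pos_pos mult_pos_neg)
    then show "\<exists>y. ((\<lambda>t. Phi a t) has_real_derivative y) (at t) \<and> y > 0"
      using Phi_deriv2[OF t2] by blast
  next
    show "continuous_on {b..F a} (Phi a)"
    proof (intro continuous_at_imp_continuous_on ballI)
      fix t assume "t \<in> {b..F a}"
      then have "a < t" "t < a + 2*pi" using assms Flt[of a] by auto
      then show "isCont (Phi a) t" using Phi_deriv2 DERIV_isCont by blast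
    qed
  qed
next
  case False
  then have lt: "F a < b" using assms(3) by simp
  show ?thesis
  proof (rule DERIV_neg_imp_decreasing_open[OF lt])
    fix t assume t: "F a < t" "t < b"
    have t2: "a < t" "t < a + 2*pi" using t assms Fgt[of a] by auto
    have "F a < F (Finv t)" using t(1) F_Finv[of t] by simp
    then have "a < Finv t" by (simp only: F_less_iff)
    then have "phi t (Finv t + 2*pi) < phi t (a + 2*pi)"
      using phi_decr[of t "a + 2*pi" "Finv t + 2*pi"] Finv_lt[of t] Finv_gt[of t] t2 by simp
    then have "- kap t * (phi t a - phi t (Finv t)) < 0"
      using kap_pos[of t] by (simp add: phi_per2 mult_pos_pos mult_pos_neg)
    then show "\<exists>y. ((\<lambda>t. Phi a t) has_real_derivative y) (at t) \<and> y < 0"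
      using Phi_deriv2[OF t2] by blast
  next
    show "continuous_on {F a..b} (Phi a)"
    proof (intro continuous_at_imp_continuous_on ballI)
      fix t assume "t \<in> {F a..b}"
      then have "a < t" "t < a + 2*pi" using assms Fgt[of a] by auto
      then show "isCont (Phi a) t" using Phi_deriv2 DERIV_isCont by blast
    qed
  qed
qed

lemma Phi_le:
  assumes "a < b" "b < a + 2*pi"
  shows "Phi a b \<le> Phi a (F a)"
  using Phi_max[OF assms] by (cases "b = F a") auto


lemma mvt_bound:
  fixes f f' :: "real \<Rightarrow> real"
  assumes "\<And>t. min a y \<le> t \<Longrightarrow> t \<le> max a y \<Longrightarrow> (f has_real_derivative f' t) (at t)"
    and "\<And>t. min a y \<le> t \<Longrightarrow> t \<le> max a y \<Longrightarrow> \<bar>f' t\<bar> \<le> B"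
  shows "\<bar>f y - f a\<bar> \<le> B * \<bar>y - a\<bar>"
proof (cases a y rule: linorder_cases)
  case less
  obtain z where z: "a < z" "z < y" "f y - f a = (y - a) * f' z"
    using MVT2[OF less, of f f'] assms(1) less by auto
  have "\<bar>f' z\<bar> \<le> B" using assms(2)[of z] z less by auto
  then show ?thesis using z less by (simp add: abs_mult mult.commute mult_left_mono)
next
  case equal then show ?thesis by simp
next
  case greater
  obtain z where z: "y < z" "z < a" "f a - f y = (a - y) * f' z"
    using MVT2[OF greater, of f f'] assms(1) greater by auto
  have "\<bar>f' z\<bar> \<le> B" using assms(2)[of z] z greater by auto
  then show ?thesis using z greater by (simp add: abs_mult mult.commute mult_left_mono abs_minus_commute)
qed

definition "GG z = - kap (fst z) * (phi (fst z) (snd z) - phi (fst z) (F (fst z)))"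

lemma GG_isCont: "isCont GG (a, F a)"
proof -
  have c1: "isCont (\<lambda>z::real\<times>real. fst z) z0" for z0 by (intro continuous_intros)
  have c2: "isCont (\<lambda>z::real\<times>real. snd z) z0" for z0 by (intro continuous_intros)
  have k: "isCont (\<lambda>z::real\<times>real. kap (fst z)) z0" for z0 using isCont_o2[OF c1 kap_isCont] by simp
  have f: "isCont (\<lambda>z::real\<times>real. F (fst z)) z0" for z0 using isCont_o2[OF c1 F_isCont] by simp
  have d: "dd (F a) a \<noteq> 0" using dd_pos[OF Fgt[of a] Flt[of a]] dd_sym[of a "F a"] by simp
  have p1: "isCont (\<lambda>z::real\<times>real. phi (fst z) (snd z)) (a, F a)"
    by (rule phi_isCont_comp[OF c1 c2]) (use d in simp)
  have p2: "isCont (\<lambda>z::real\<times>real. phi (fst z) (F (fst z))) (a, F a)"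
    by (rule phi_isCont_comp[OF c1 f]) (use d in simp)
  show ?thesis unfolding GG_def[abs_def] by (intro continuous_intros k p1 p2)
qed

lemma GG_zero: "GG (a, F a) = 0" unfolding GG_def by simp

definition "cfun a = Phi a (F a)"

lemma cfun_deriv: "(cfun has_real_derivative 0) (at a)"
  unfolding has_field_derivative_iff
proof (rule LIM_I)
  fix r :: real assume r: "0 < r"
  define e where "e = r/2"
  have e: "e > 0" "e < r" using r unfolding e_def by auto
  obtain d1 where d1: "d1 > 0" "\<And>z. dist z (a, F a) < d1 \<Longrightarrow> dist (GG z) (GG (a, F a)) < e"
    using GG_isCont[of a] e(1) unfolding continuous_at_eps_delta by blast
  define m where "m = min (F a - a) (a + 2*pi - F a) / 2"
  have m: "m > 0" "2 * m \<le> F a - a" "2 * m \<le> a + 2*pi - F a"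
    unfolding m_def using Fgt[of a] Flt[of a] by auto
  obtain d2 where d2: "d2 > 0" "\<And>y. dist y a < d2 \<Longrightarrow> dist (F y) (F a) < min (d1/2) m"
    using F_isCont[of a] d1(1) m(1) unfolding continuous_at_eps_delta
    by (metis half_gt_zero min_less_iff_conj)
  define s where "s = min (min d2 m) (d1/2)"
  have s: "s > 0" unfolding s_def using d1 d2 m by simp
  have bound: "\<bar>Phi y b - Phi a b\<bar> \<le> e * \<bar>y - a\<bar>"
    if y: "\<bar>y - a\<bar> < s" and b: "\<bar>b - F a\<bar> < min (d1/2) m" for y b
  proof (rule mvt_bound)
    fix t assume t: "min a y \<le> t" "t \<le> max a y"
    have ta: "\<bar>t - a\<bar> < s"
    proof (cases "a \<le> y")
      case True then show ?thesis using t y by (simp add: min_def max_def abs_less_iff)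
    next
      case False then show ?thesis using t y by (simp add: min_def max_def abs_less_iff)
    qed
    have "t < b" "b < t + 2*pi" using ta b m unfolding s_def by (auto simp: abs_less_iff)
    then show "((\<lambda>t. Phi t b) has_real_derivative GG (t, b)) (at t)"
      unfolding GG_def using Phi_deriv1 by simp
    have "dist (t, b) (a, F a) < d1"
    proof -
      have "\<bar>t - a\<bar> < d1/2" "\<bar>b - F a\<bar> < d1/2" using ta b unfolding s_def by auto
      have le: "(t - a)^2 + (b - F a)^2 \<le> (\<bar>t - a\<bar> + \<bar>b - F a\<bar>)^2"
        by (simp add: power2_sum)
      have "sqrt ((t - a)^2 + (b - F a)^2) \<le> sqrt ((\<bar>t - a\<bar> + \<bar>b - F a\<bar>)^2)"
        using le real_sqrt_le_mono by blast
      also have "\<dots> = \<bar>t - a\<bar> + \<bar>b - F a\<bar>" by simp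
      also have "\<dots> < d1" using \<open>\<bar>t - a\<bar> < d1/2\<close> \<open>\<bar>b - F a\<bar> < d1/2\<close> by simp
      finally have "sqrt ((t - a)^2 + (b - F a)^2) < d1" .
      then show ?thesis by (simp add: dist_prod_def dist_real_def)
    qed
    then have "dist (GG (t, b)) (GG (a, F a)) < e" by (rule d1(2))
    then show "\<bar>GG (t, b)\<bar> \<le> e" using GG_zero[of a] by (simp add: dist_real_def)
  qed
  show "\<exists>s>0. \<forall>y. y \<noteq> a \<and> norm (y - a) < s \<longrightarrow> norm ((cfun y - cfun a) / (y - a) - 0) < r"
  proof (intro exI[of _ s] conjI allI impI)
    show "s > 0" by (rule s)
    fix y assume ya: "y \<noteq> a \<and> norm (y - a) < s"
    then have ys: "\<bar>y - a\<bar> < s" by simp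
    have Fy: "\<bar>F y - F a\<bar> < min (d1/2) m" using d2(2)[of y] ys unfolding s_def by (simp add: dist_real_def)
    have b0: "\<bar>F a - F a\<bar> < min (d1/2) m" using d1(1) m(1) by simp
    have B1: "\<bar>Phi y (F a) - Phi a (F a)\<bar> \<le> e * \<bar>y - a\<bar>" by (rule bound[OF ys b0])
    have B2: "\<bar>Phi y (F y) - Phi a (F y)\<bar> \<le> e * \<bar>y - a\<bar>" by (rule bound[OF ys Fy])
    have L1: "Phi y (F a) \<le> Phi y (F y)"
      by (rule Phi_le) (use ys m in \<open>auto simp: s_def abs_less_iff\<close>)
    have L2: "Phi a (F y) \<le> Phi a (F a)"
      by (rule Phi_le) (use Fy m in \<open>auto simp: abs_less_iff\<close>)
    have "\<bar>cfun y - cfun a\<bar> \<le> e * \<bar>y - a\<bar>"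
      unfolding cfun_def using B1 B2 L1 L2 by (auto simp: abs_le_iff)
    then have "\<bar>(cfun y - cfun a) / (y - a)\<bar> \<le> e"
      using ya by (simp add: abs_divide divide_le_eq)
    then show "norm ((cfun y - cfun a) / (y - a) - 0) < r" using e by simp
  qed
qed

lemma cfun_const: "cfun a = cfun 0"
  using cfun_deriv by (intro DERIV_isconst_all) auto

lemma uu_shift_const: "uu (x + 2*pi) - uu x = uu (0 + 2*pi) - uu 0"
proof (rule DERIV_isconst_all[of "\<lambda>x. uu (x + 2*pi) - uu x"], rule allI)
  fix x :: real
  have "((\<lambda>x. uu (x + 2*pi)) has_real_derivative pp (x + 2*pi) * 1) (at x)"
    by (rule DERIV_chain2[OF uu_deriv]) (auto intro!: derivative_eq_intros)
  then have "((\<lambda>x. uu (x + 2*pi) - uu x) has_real_derivative pp (x + 2*pi) * 1 - pp x) (at x)"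
    by (intro derivative_intros uu_deriv)
  then show "((\<lambda>x. uu (x + 2*pi) - uu x) has_real_derivative 0) (at x)" by (simp add: pp_per)
qed


definition "Cc = cfun 0"
lemma cfun_eq: "cfun a = Cc" unfolding Cc_def by (rule cfun_const)

definition "adm z \<longleftrightarrow> (\<forall>k<4. z k < z (Suc k) \<and> z (Suc k) < z k + 2*pi) \<and> z 4 = z 0 + 2*pi"
definition "W z = (\<Sum>k<4. dd (z (Suc k)) (z k))"
definition "rho = uu (0 + 2*pi) - uu 0"
definition "Wmax = 4 * Cc + rho"

lemma W_expand: "W z = dd (z 1) (z 0) + dd (z 2) (z 1) + dd (z 3) (z 2) + dd (z 4) (z 3)"
  unfolding W_def by (simp add: eval_nat_numeral)

lemma W_split:
  assumes "adm z"
  shows "W z = (\<Sum>k<4. Phi (z k) (z (Suc k))) + rho"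
proof -
  have "W z = (\<Sum>k<4. Phi (z k) (z (Suc k)) + (uu (z (Suc k)) - uu (z k)))"
    unfolding W_def Phi_def by simp
  also have "\<dots> = (\<Sum>k<4. Phi (z k) (z (Suc k))) + (\<Sum>k<4. uu (z (Suc k)) - uu (z k))"
    by (simp add: sum.distrib)
  also have "(\<Sum>k<4. uu (z (Suc k)) - uu (z k)) = uu (z 4) - uu (z 0)"
    by (rule sum_lessThan_telescope[of "\<lambda>k. uu (z k)"])
  also have "\<dots> = rho" using assms uu_shift_const[of "z 0"] unfolding adm_def rho_def by simp
  finally show ?thesis .
qed

lemma Phi_le_c: "a < b \<Longrightarrow> b < a + 2*pi \<Longrightarrow> Phi a b \<le> Cc"
  using Phi_le cfun_eq unfolding cfun_def by metis

lemma W_le: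
  assumes "adm z"
  shows "W z \<le> Wmax"
proof -
  have "(\<Sum>k<4. Phi (z k) (z (Suc k))) \<le> (\<Sum>k<(4::nat). Cc)"
    by (rule sum_mono) (use assms Phi_le_c in \<open>auto simp: adm_def\<close>)
  then show ?thesis unfolding W_split[OF assms] Wmax_def by simp
qed

lemma W_eq:
  assumes "adm z" "W z = Wmax" "k < 4"
  shows "z (Suc k) = F (z k)"
proof (rule ccontr)
  assume ne: "z (Suc k) \<noteq> F (z k)"
  have "(\<Sum>k<4. Phi (z k) (z (Suc k))) < (\<Sum>k<(4::nat). Cc)"
  proof (rule sum_strict_mono_ex1)
    show "finite {..<(4::nat)}" by simp
    show "\<forall>x\<in>{..<4}. Phi (z x) (z (Suc x)) \<le> Cc" using assms(1) Phi_le_c by (auto simp: adm_def)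
    have "Phi (z k) (z (Suc k)) < cfun (z k)"
      unfolding cfun_def by (rule Phi_max) (use assms ne in \<open>auto simp: adm_def\<close>)
    then show "\<exists>a\<in>{..<4}. Phi (z a) (z (Suc a)) < Cc" using assms(3) cfun_eq by auto
  qed
  then show False using assms(2) unfolding W_split[OF assms(1)] Wmax_def by simp
qed

definition "orb x0 k = (F ^^ k) x0"

lemma orb_Suc: "orb x0 (Suc k) = F (orb x0 k)" unfolding orb_def by simp
lemma orb_0: "orb x0 0 = x0" unfolding orb_def by simp
lemma orb_4: "orb x0 4 = x0 + 2*pi" unfolding orb_def by (rule F4)

lemma adm_orb: "adm (orb x0)"
  unfolding adm_def using orb_4 by (simp add: orb_Suc Fgt Flt orb_0)

lemma W_orb: "W (orb x0) = Wmax"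
proof -
  have "(\<Sum>k<4. Phi (orb x0 k) (orb x0 (Suc k))) = (\<Sum>k<(4::nat). Cc)"
    by (rule sum.cong) (auto simp: orb_Suc cfun_def[symmetric] cfun_eq)
  then show ?thesis unfolding W_split[OF adm_orb] Wmax_def by simp
qed

lemma submod:
  assumes "a \<le> a'" "a' < b" "b \<le> b'" "b' < a + 2*pi"
  shows "dd b' a + dd b a' \<le> dd b a + dd b' a'"
proof -
  have der: "((\<lambda>t. dd t a' - dd t a) has_real_derivative kap t * (phi t a - phi t a')) (at t)"
    if t: "b \<le> t" "t \<le> b'" for t
  proof -
    have p1: "dd t a' > 0" using dd_pos'[of a' t] t assms by simp
    have p2: "dd t a > 0" using dd_pos'[of a t] t assms by simp
    have "((\<lambda>t. dd t a' - dd t a) has_real_derivative - (kap t * phi t a') - - (kap t * phi t a)) (at t)"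
      by (intro derivative_intros dd_deriv p1 p2)
    then show ?thesis by (simp add: algebra_simps)
  qed
  have "dd b a' - dd b a \<le> dd b' a' - dd b' a"
  proof (rule DERIV_nonneg_imp_increasing_open[OF assms(3)])
    fix t assume t: "b < t" "t < b'"
    have "phi t (a' + 2*pi) \<le> phi t (a + 2*pi)"
      by (rule phi_decr_le) (use t assms in auto)
    then have "kap t * (phi t a - phi t a') \<ge> 0" using kap_pos[of t] by (simp add: phi_per2)
    then show "\<exists>y. ((\<lambda>t. dd t a' - dd t a) has_real_derivative y) (at t) \<and> y \<ge> 0"
      using der[of t] t by auto
  next
    show "continuous_on {b..b'} (\<lambda>t. dd t a' - dd t a)"
      using der DERIV_isCont by (intro continuous_at_imp_continuous_on ballI) auto
  qed
  then show ?thesis by simp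
qed

lemma pair_ineq:
  assumes "a1 < b1" "b1 < a1 + 2*pi" "a2 < b2" "b2 < a2 + 2*pi"
  shows "dd b1 a1 + dd b2 a2 \<le> dd (min b1 b2) (min a1 a2) + dd (max b1 b2) (max a1 a2)"
proof (cases "a1 \<le> a2")
  case True
  show ?thesis
  proof (cases "b1 \<le> b2")
    case True then show ?thesis using \<open>a1 \<le> a2\<close> by (simp add: min_def max_def)
  next
    case False
    have "dd b1 a1 + dd b2 a2 \<le> dd b2 a1 + dd b1 a2"
      using submod[of a1 a2 b2 b1] True False assms by simp
    then show ?thesis using True False by (simp add: min_def max_def)
  qed
next
  case False
  show ?thesis
  proof (cases "b2 \<le> b1")
    case True then show ?thesis using False by (simp add: min_def max_def add.commute)
  next
    case False2: False
    have "dd b2 a2 + dd b1 a1 \<le> dd b1 a2 + dd b2 a1"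
      using submod[of a2 a1 b1 b2] False False2 assms by simp
    then show ?thesis using False False2 by (simp add: min_def max_def add.commute)
  qed
qed

lemma adm_min: "adm x \<Longrightarrow> adm y \<Longrightarrow> adm (\<lambda>k. min (x k) (y k))"
  unfolding adm_def by (auto simp: min_def)

lemma adm_max: "adm x \<Longrightarrow> adm y \<Longrightarrow> adm (\<lambda>k. max (x k) (y k))"
  unfolding adm_def by (auto simp: max_def)

lemma W_min_max:
  assumes "adm x" "adm y"
  shows "W x + W y \<le> W (\<lambda>k. min (x k) (y k)) + W (\<lambda>k. max (x k) (y k))"
proof -
  have "W x + W y = (\<Sum>k<4. dd (x (Suc k)) (x k) + dd (y (Suc k)) (y k))"
    unfolding W_def by (simp add: sum.distrib)
  also have "\<dots> \<le> (\<Sum>k<4. dd (min (x (Suc k)) (y (Suc k))) (min (x k) (y k))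
      + dd (max (x (Suc k)) (y (Suc k))) (max (x k) (y k)))"
    by (rule sum_mono, rule pair_ineq) (use assms in \<open>auto simp: adm_def\<close>)
  also have "\<dots> = W (\<lambda>k. min (x k) (y k)) + W (\<lambda>k. max (x k) (y k))"
    unfolding W_def by (simp add: sum.distrib)
  finally show ?thesis .
qed


lemma F2: "F (F x0) = x0 + pi"
proof -
  define x where "x = orb x0"
  define y where "y = (\<lambda>k. x (k + 2) - pi)"
  have xS: "x (Suc k) = F (x k)" for k unfolding x_def by (rule orb_Suc)
  have x0: "x 0 = x0" unfolding x_def by (rule orb_0)
  have x4: "x 4 = x0 + 2*pi" unfolding x_def by (rule orb_4)
  have x1: "x 1 = F x0" using xS[of 0] x0 by simp
  have x2: "x 2 = F (F x0)" using xS[of 1] x1 by (simp add: numeral_2_eq_2)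
  have x5: "x 5 = x 1 + 2*pi" using xS[of 4] x4 x1 Fper[of x0] by simp
  have x21: "x 2 = F (x 1)" using xS[of 1] by (simp add: numeral_2_eq_2)
  have x6: "x 6 = x 2 + 2*pi"
  proof -
    have "x 6 = F (x 5)" using xS[of 5] by simp
    also have "\<dots> = F (x 1) + 2*pi" unfolding x5 by (rule Fper)
    finally show ?thesis using x21 by simp
  qed
  have admx: "adm x" unfolding x_def by (rule adm_orb)
  have Wx: "W x = Wmax" unfolding x_def by (rule W_orb)
  have admy: "adm y"
    unfolding adm_def y_def
  proof (intro conjI allI impI)
    fix k :: nat assume "k < 4"
    show "x (k + 2) - pi < x (Suc k + 2) - pi" using xS[of "k+2"] Fgt[of "x (k+2)"] by simp
    show "x (Suc k + 2) - pi < x (k + 2) - pi + 2 * pi" using xS[of "k+2"] Flt[of "x (k+2)"] by simp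
  next
    show "x (4 + 2) - pi = x (0 + 2) - pi + 2 * pi" using x6 by (simp add: numeral_2_eq_2)
  qed
  have Wy: "W y = Wmax"
  proof -
    have "W y = dd (x 3 - pi) (x 2 - pi) + dd (x 4 - pi) (x 3 - pi) + dd (x 5 - pi) (x 4 - pi) + dd (x 6 - pi) (x 5 - pi)"
      unfolding W_expand y_def by (simp add: eval_nat_numeral)
    also have "\<dots> = dd (x 3) (x 2) + dd (x 4) (x 3) + dd (x 5) (x 4) + dd (x 6) (x 5)"
      by (simp add: dd_shift_both_m)
    also have "dd (x 5) (x 4) = dd (x 1) (x 0)" unfolding x5 x4 x0 by (simp add: dd_per1 dd_per2)
    also have "dd (x 6) (x 5) = dd (x 2) (x 1)" unfolding x6 x5 by (simp add: dd_per1 dd_per2)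
    finally have "W y = W x" unfolding W_expand by simp
    then show ?thesis using Wx by simp
  qed
  define m where "m = (\<lambda>k. min (x k) (y k))"
  define M where "M = (\<lambda>k. max (x k) (y k))"
  have admm: "adm m" unfolding m_def by (rule adm_min[OF admx admy])
  have admM: "adm M" unfolding M_def by (rule adm_max[OF admx admy])
  have "W x + W y \<le> W m + W M" unfolding m_def M_def by (rule W_min_max[OF admx admy])
  then have Wm: "W m = Wmax" and WM: "W M = Wmax" using W_le[OF admm] W_le[OF admM] Wx Wy by linarith+
  have mS: "k < 4 \<Longrightarrow> m (Suc k) = F (m k)" for k by (rule W_eq[OF admm Wm])
  have MS: "k < 4 \<Longrightarrow> M (Suc k) = F (M k)" for k by (rule W_eq[OF admM WM])
  have y0: "y 0 = x 2 - pi" unfolding y_def by (simp add: numeral_2_eq_2)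
  have y2: "y 2 = x0 + pi" unfolding y_def using x4 by simp
  have "y 0 = x 0"
  proof (rule ccontr)
    assume "y 0 \<noteq> x 0"
    then consider "x 0 < y 0" | "y 0 < x 0" by linarith
    then show False
    proof cases
      case 1
      then have "m 0 = x 0" unfolding m_def by simp
      then have "m 1 = x 1" using mS[of 0] xS[of 0] by simp
      then have "m 2 = x 2" using mS[of 1] xS[of 1] by (simp add: numeral_2_eq_2)
      then have "x 2 \<le> y 2" unfolding m_def by (simp add: min_def split: if_splits)
      then show False using 1 y0 y2 x0 by simp
    next
      case 2
      then have "M 0 = x 0" unfolding M_def by simp
      then have "M 1 = x 1" using MS[of 0] xS[of 0] by simp
      then have "M 2 = x 2" using MS[of 1] xS[of 1] by (simp add: numeral_2_eq_2)
      then have "y 2 \<le> x 2" unfolding M_def by (simp add: max_def split: if_splits)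
      then show False using 2 y0 y2 x0 by simp
    qed
  qed
  then show ?thesis using y0 x0 x2 by simp
qed

lemma F_shift_pi: "F (t + pi) = F t + pi"
proof -
  have "F (t + pi) = F (F (F t))" using F2[of t] by simp
  also have "\<dots> = F t + pi" by (rule F2)
  finally show ?thesis .
qed

theorem cond_of_rot: "h a * hh1 a + h (a + pi/2) * hh1 (a + pi/2) = 0"
proof -
  define b where "b = F a"
  have Fb: "F b = a + pi" unfolding b_def by (rule F2)
  have ab: "a < b" "b < a + pi" using Fgt[of a] Fgt[of b] Fb unfolding b_def by auto
  have Finva: "Finv a = b - pi"
    unfolding Finv_def b_def using F2[of a] F_shift_pi[of a] by simp
  have Finvb: "Finv b = a" unfolding b_def by (rule Finv_F)
  have R1: "phi b a + phi b (a + pi) = 0" using refl_at[of b] Finvb Fb by simp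
  have R2: "phi a (b - pi) + phi a b = 0" using refl_at[of a] Finva b_def by simp
  have bq: "b = a + pi/2" by (rule perp[OF ab R1 R2])
  show ?thesis using quarter[of a] R1 bq by simp
qed

end



lemma cis_int_2pi: "cis (of_int m * (2*pi)) = 1"
  using cis_multiple_2pi[of "of_int m"] by (simp add: mult.commute)

lemma cis_int_deriv:
  "((\<lambda>t. cis (of_int m * t)) has_vector_derivative (\<i> * of_int m * cis (of_int m * t))) (at t within S)"
proof -
  have "((\<lambda>t. cis (of_int m * t)) has_derivative (\<lambda>h. (of_int m * h) *\<^sub>R (\<i> * cis (of_int m * t)))) (at t within S)"
    by (intro has_derivative_cis derivative_intros)
  moreover have "(\<lambda>h. (of_int m * h) *\<^sub>R (\<i> * cis (of_int m * t))) = (\<lambda>h. h *\<^sub>R (\<i> * of_int m * cis (of_int m * t)))"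
    by (auto simp: fun_eq_iff scaleR_conv_of_real)
  ultimately show ?thesis unfolding has_vector_derivative_def by simp
qed

lemma cis_int_integral:
  "((\<lambda>t. cis (of_int m * t)) has_integral (if m = 0 then of_real (2*pi) else 0)) {0..2*pi}"
proof (cases "m = 0")
  case True
  then show ?thesis using has_integral_const_real[of "1::complex" 0 "2*pi"] by (simp add: scaleR_conv_of_real)
next
  case False
  define c where "c = inverse (\<i> * of_int m)"
  have "((\<lambda>t. cis (of_int m * t) * c) has_vector_derivative cis (of_int m * x)) (at x within {0..2*pi})" for x
  proof -
    have "((\<lambda>t. cis (of_int m * t) * c) has_vector_derivative (\<i> * of_int m * cis (of_int m * x)) * c) (at x within {0..2*pi})"
      by (intro has_vector_derivative_mult_left cis_int_deriv)
    moreover have "(\<i> * of_int m * cis (of_int m * x)) * c = cis (of_int m * x)"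
      unfolding c_def using False by (simp add: field_simps)
    ultimately show ?thesis by simp
  qed
  then have "((\<lambda>t. cis (of_int m * t)) has_integral (cis (of_int m * (2*pi)) * c - cis (of_int m * 0) * c)) {0..2*pi}"
    by (intro fundamental_theorem_of_calculus) auto
  then show ?thesis using False by (simp add: cis_int_2pi)
qed

lemma cis_int_integral':
  "((\<lambda>t. cis (of_int n * t) * cis (- (of_int m * t))) has_integral (if n = m then of_real (2*pi) else 0)) {0..2*pi}"
proof -
  have "cis (of_int n * t) * cis (- (of_int m * t)) = cis (of_int (n - m) * t)" for t
    by (simp add: cis_mult algebra_simps)
  then show ?thesis using cis_int_integral[of "n - m"] by simp
qed


lemma split_infsum_finite:
  fixes f :: "'a \<Rightarrow> 'b::banach"
  assumes "f summable_on UNIV" "finite A"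
  shows "infsum f UNIV = sum f A + infsum f (UNIV - A)"
proof -
  have "infsum f (A \<union> (UNIV - A)) = infsum f A + infsum f (UNIV - A)"
    by (rule infsum_Un_disjoint) (use assms summable_on_subset_banach in auto)
  then show ?thesis using assms(2) by simp
qed

lemma sym_sets_filterlim:
  "filterlim (\<lambda>N::nat. {- int N..int N}) (finite_subsets_at_top UNIV) sequentially"
  unfolding filterlim_finite_subsets_at_top
proof (intro allI impI)
  fix X :: "int set" assume X: "finite X \<and> X \<subseteq> UNIV"
  obtain b where b: "\<And>x. x \<in> X \<Longrightarrow> \<bar>x\<bar> \<le> b"
  proof -
    have "finite (abs ` X)" using X by simp
    then obtain b where "\<forall>y\<in>abs ` X. y \<le> b" using finite_has_maximal2 
      by (metis bdd_above.unfold bdd_above_finite)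
    then show ?thesis using that by auto
  qed
  have "eventually (\<lambda>N::nat. int N \<ge> b) sequentially"
    using eventually_ge_at_top[of "nat b"] by eventually_elim auto
  then show "eventually (\<lambda>N. finite {- int N..int N} \<and> X \<subseteq> {- int N..int N} \<and> {- int N..int N} \<subseteq> UNIV) sequentially"
    by eventually_elim (use b in \<open>force simp: abs_le_iff\<close>)
qed

locale fsyn =
  fixes d :: "int \<Rightarrow> complex"
  assumes dsum: "(\<lambda>n. norm (d n)) summable_on UNIV"
begin

definition "S x = infsum (\<lambda>n. d n * cis (of_int n * x)) UNIV"
definition "P N x = sum (\<lambda>n. d n * cis (of_int n * x)) {- int N..int N}"
definition "T = infsum (\<lambda>n. norm (d n)) UNIV"
definition "tail N = T - sum (\<lambda>n. norm (d n)) {- int N..int N}"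

lemma summ: "(\<lambda>n. d n * cis (of_int n * x)) summable_on UNIV"
  by (rule abs_summable_summable) (simp add: norm_mult dsum)

lemma has_S: "((\<lambda>n. d n * cis (of_int n * x)) has_sum S x) UNIV"
  unfolding S_def using summ by (rule has_sum_infsum)

lemma tail_tendsto: "tail \<longlonglongrightarrow> 0"
proof -
  have "((\<lambda>F. sum (\<lambda>n. norm (d n)) F) \<longlongrightarrow> T) (finite_subsets_at_top UNIV)"
    unfolding T_def by (rule infsum_tendsto[OF dsum])
  then have "((\<lambda>N. sum (\<lambda>n. norm (d n)) {- int N..int N}) \<longlongrightarrow> T) sequentially"
    by (rule filterlim_compose[OF _ sym_sets_filterlim])
  then have "((\<lambda>N. T - sum (\<lambda>n. norm (d n)) {- int N..int N}) \<longlongrightarrow> T - T) sequentially"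
    by (intro tendsto_intros)
  then show ?thesis unfolding tail_def by simp
qed

lemma S_P_bound: "norm (S x - P N x) \<le> tail N"
proof -
  let ?A = "{- int N..int N}"
  let ?f = "\<lambda>n. d n * cis (of_int n * x)"
  have nsum: "(\<lambda>n. norm (?f n)) summable_on UNIV" by (simp add: norm_mult dsum)
  have "S x - P N x = infsum ?f (UNIV - ?A)"
    unfolding S_def P_def using split_infsum_finite[OF summ, of ?A] by simp
  also have "norm \<dots> \<le> infsum (\<lambda>n. norm (?f n)) (UNIV - ?A)"
    by (rule norm_infsum_bound) (rule summable_on_subset_banach[OF nsum], simp)
  also have "\<dots> = tail N"
    unfolding tail_def T_def using split_infsum_finite[OF dsum, of ?A] by (simp add: norm_mult)
  finally show ?thesis .
qed

lemma uniform: "uniform_limit UNIV P S sequentially"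
proof (rule uniform_limitI)
  fix e :: real assume "e > 0"
  then have "eventually (\<lambda>N. dist (tail N) 0 < e) sequentially"
    using tail_tendsto tendsto_iff by blast
  then show "eventually (\<lambda>N. \<forall>x\<in>UNIV. dist (P N x) (S x) < e) sequentially"
  proof eventually_elim
    case (elim N)
    then have "tail N < e" by (simp add: dist_real_def)
    then show ?case using S_P_bound by (auto simp: dist_norm norm_minus_commute intro: le_less_trans)
  qed
qed

lemma P_cont: "continuous_on UNIV (P N)"
  unfolding P_def[abs_def] by (intro continuous_intros)

lemma S_cont: "continuous_on UNIV S"
  by (rule uniform_limit_theorem[OF _ uniform]) (auto intro!: always_eventually P_cont)

lemma P_coef:
  assumes "\<bar>m\<bar> \<le> int N"
  shows "((\<lambda>t. P N t * cis (- (of_int m * t))) has_integral (of_real (2*pi) * d m)) {0..2*pi}"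
proof -
  have "((\<lambda>t. \<Sum>n\<in>{- int N..int N}. d n * (cis (of_int n * t) * cis (- (of_int m * t)))) has_integral
      (\<Sum>n\<in>{- int N..int N}. d n * (if n = m then of_real (2*pi) else 0))) {0..2*pi}"
    by (intro has_integral_sum has_integral_mult_right cis_int_integral') auto
  moreover have "(\<Sum>n\<in>{- int N..int N}. d n * (if n = m then of_real (2*pi) else 0)) = of_real (2*pi) * d m"
  proof -
    have "\<And>n. d n * (if n = m then of_real (2*pi) else 0) = (if n = m then d n * of_real (2*pi) else 0)" by simp
    moreover have "m \<in> {- int N..int N}" using assms by auto
    ultimately show ?thesis by (simp add: sum.delta mult.commute)
  qed
  ultimately show ?thesis unfolding P_def by (simp add: sum_distrib_right mult.assoc)
qed

lemma S_coef: "((\<lambda>t. S t * cis (- (of_int m * t))) has_integral (of_real (2*pi) * d m)) {0..2*pi}"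
proof -
  have u: "uniform_limit (cbox 0 (2*pi)) (\<lambda>N t. P N t * cis (- (of_int m * t))) (\<lambda>t. S t * cis (- (of_int m * t))) sequentially"
  proof (rule uniform_limitI)
    fix e :: real assume "e > 0"
    then have "eventually (\<lambda>N. \<forall>x\<in>UNIV. dist (P N x) (S x) < e) sequentially"
      using uniform uniform_limitD by blast
    then show "eventually (\<lambda>N. \<forall>x\<in>cbox 0 (2*pi). dist (P N x * cis (- (of_int m * x))) (S x * cis (- (of_int m * x))) < e) sequentially"
      by eventually_elim (simp add: dist_norm left_diff_distrib[symmetric] norm_mult)
  qed
  obtain I J where I: "\<And>N. ((\<lambda>t. P N t * cis (- (of_int m * t))) has_integral I N) (cbox 0 (2*pi))"
    and J: "((\<lambda>t. S t * cis (- (of_int m * t))) has_integral J) (cbox 0 (2*pi))"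
    and lim: "I \<longlonglongrightarrow> J"
    by (rule uniform_limit_integral_cbox[OF u]) (auto intro!: continuous_intros continuous_on_subset[OF P_cont])
  have "eventually (\<lambda>N. I N = of_real (2*pi) * d m) sequentially"
    using eventually_ge_at_top[of "nat \<bar>m\<bar>"]
  proof eventually_elim
    case (elim N)
    then have "\<bar>m\<bar> \<le> int N" by simp
    then show ?case using P_coef I[of N] has_integral_unique by (metis box_real(2))
  qed
  then have "I \<longlonglongrightarrow> of_real (2*pi) * d m" by (rule tendsto_eventually)
  then have "J = of_real (2*pi) * d m" using lim LIMSEQ_unique by blast
  then show ?thesis using J by simp
qed

end


inductive TP :: "(real \<Rightarrow> complex) \<Rightarrow> bool" where
  mono: "TP (\<lambda>t. c * cis (of_int k * t))"
| add: "TP f \<Longrightarrow> TP g \<Longrightarrow> TP (\<lambda>t. f t + g t)"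

lemma TP_cong: "TP f \<Longrightarrow> (\<And>t. f t = g t) \<Longrightarrow> TP g"
proof -
  assume "TP f" "\<And>t. f t = g t"
  then have "f = g" by auto
  then show "TP g" using \<open>TP f\<close> by simp
qed

lemma TP_const: "TP (\<lambda>t. c)"
  using TP.mono[of c 0] by simp

lemma TP_mult_mono: "TP g \<Longrightarrow> TP (\<lambda>t. c * cis (of_int k * t) * g t)"
proof (induction g rule: TP.induct)
  case (mono c' k')
  show ?case
    by (rule TP_cong[OF TP.mono[of "c * c'" "k + k'"]]) (simp add: cis_mult algebra_simps)
next
  case (add f g)
  show ?case by (rule TP_cong[OF TP.add[OF add.IH]]) (simp add: algebra_simps)
qed

lemma TP_mult: "TP f \<Longrightarrow> TP g \<Longrightarrow> TP (\<lambda>t. f t * g t)"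
proof (induction f rule: TP.induct)
  case (mono c k)
  then show ?case using TP_mult_mono by blast
next
  case (add f1 f2)
  then have "TP (\<lambda>t. f1 t * g t)" "TP (\<lambda>t. f2 t * g t)" by auto
  then show ?case by (rule TP_cong[OF TP.add]) (simp add: algebra_simps)
qed

lemma TP_cont: "TP f \<Longrightarrow> continuous_on UNIV f"
  by (induction f rule: TP.induct) (auto intro!: continuous_intros)

lemma TP_poly:
  "real_polynomial_function p \<Longrightarrow> TP (\<lambda>t. complex_of_real (p (cis t)))"
proof (induction p rule: real_polynomial_function.induct)
  case (linear f)
  have lin: "linear f" using linear.hyps bounded_linear.linear by blast
  have c: "cis t = cos t *\<^sub>R 1 + sin t *\<^sub>R \<i>" for t by (simp add: complex_eq_iff)
  have fe: "f (cis t) = cos t * f 1 + sin t * f \<i>" for t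
    unfolding c using lin by (simp add: linear_add linear_scale)
  define a where "a = f 1"
  define b where "b = f \<i>"
  have "TP (\<lambda>t. ((a - \<i> * b) / 2) * cis (of_int 1 * t) + ((a + \<i> * b) / 2) * cis (of_int (-1) * t))"
    by (intro TP.add TP.mono)
  then show ?case
    by (rule TP_cong) (simp add: fe a_def[symmetric] b_def[symmetric] complex_eq_iff cis.sel field_simps)
next
  case (const c)
  show ?case by (rule TP_const)
next
  case (add f g)
  show ?case by (rule TP_cong[OF TP.add[OF add.IH]]) simp
next
  case (mult f g)
  show ?case by (rule TP_cong[OF TP_mult[OF mult.IH]]) simp
qed

lemma per_int:
  assumes "\<And>t. v (t + 2*pi) = v t"
  shows "v (t + of_int k * (2*pi)) = v t"
proof (induction k rule: int_induct[where k = 0])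
  case base then show ?case by simp
next
  case (step1 i)
  have "v (t + of_int (i + 1) * (2*pi)) = v (t + of_int i * (2*pi) + 2*pi)" by (simp add: algebra_simps)
  then show ?case using assms step1 by simp
next
  case (step2 i)
  have "v (t + of_int i * (2*pi)) = v (t + of_int (i - 1) * (2*pi) + 2*pi)" by (simp add: algebra_simps)
  then show ?case using assms step2 by simp
qed

lemma cis_eq_imp:
  assumes "cis a = cis b"
  shows "\<exists>k::int. a = b + of_int k * (2*pi)"
proof -
  have "cis (a - b) = 1" using assms by (simp add: cis_divide[symmetric])
  then have "cos (a - b) = 1" by (simp add: complex_eq_iff)
  then obtain n :: int where "a - b = of_int n * 2 * pi" using cos_one_2pi_int by blast
  then show ?thesis by (intro exI[of _ n]) (simp add: algebra_simps)
qed

lemma per_cis_eq: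
  assumes "\<And>t. v (t + 2*pi) = v t" "cis a = cis b"
  shows "v a = v b"
  using cis_eq_imp[OF assms(2)] per_int[of v, OF assms(1)] by auto

lemma Arg_cis_per:
  assumes "\<And>t. v (t + 2*pi) = v t"
  shows "v (Arg (cis t)) = v t"
  by (rule per_cis_eq[of v, OF assms]) (simp add: cis_Arg sgn_cis)

lemma V_cont:
  fixes v :: "real \<Rightarrow> 'a::real_normed_vector"
  assumes cont: "continuous_on UNIV v" and per: "\<And>t. v (t + 2*pi) = v t"
  shows "continuous_on (sphere 0 1) (\<lambda>z. v (Arg z))"
  unfolding continuous_on_eq_continuous_within
proof (intro ballI)
  fix z :: complex assume z: "z \<in> sphere 0 1"
  show "continuous (at z within sphere 0 1) (\<lambda>z. v (Arg z))"
  proof (cases "z \<in> \<real>\<^sub>\<le>\<^sub>0")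
    case False
    have "continuous (at z) (\<lambda>z. v (Arg z))"
      by (rule continuous_at_compose[OF continuous_at_Arg[OF False], unfolded o_def])
         (use cont continuous_on_eq_continuous_within in auto)
    then show ?thesis using continuous_at_imp_continuous_within by blast
  next
    case True
    have z0: "z \<noteq> 0" using z by auto
    then have nz: "- z \<notin> \<real>\<^sub>\<le>\<^sub>0" using True by (auto simp: nonpos_Reals_def complex_eq_iff)
    have c2: "continuous (at z) (\<lambda>z. v (Arg (- z) + pi))"
    proof -
      have m: "continuous (at z) (\<lambda>z::complex. - z)" by (intro continuous_intros)
      have a: "continuous (at z) (\<lambda>z. Arg (- z))"
        using continuous_at_compose[OF m, of Arg] continuous_at_Arg[OF nz] by (simp add: o_def)
      have "continuous (at z) (\<lambda>z. Arg (- z) + pi)" by (intro continuous_intros a)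
      then show ?thesis
        by (rule continuous_at_compose[unfolded o_def]) (use cont continuous_on_eq_continuous_within in auto)
    qed
    have eq: "v (Arg (- w) + pi) = v (Arg w)" if "w \<in> sphere 0 1" for w
    proof (rule per_cis_eq[of v, OF per])
      have "w \<noteq> 0" using that by auto
      then show "cis (Arg (- w) + pi) = cis (Arg w)"
        by (simp add: cis_mult[symmetric] cis_Arg sgn_minus)
    qed
    show ?thesis
      by (rule continuous_transform_within[OF continuous_at_imp_continuous_within[OF c2], of 1])
         (use z eq in auto)
  qed
qed


lemma TP_int_zero:
  assumes coef: "\<And>k::int. ((\<lambda>t. v t * cis (of_int k * t)) has_integral 0) {0..2*pi}"
  shows "TP f \<Longrightarrow> ((\<lambda>t. v t * f t) has_integral 0) {0..2*pi}"
proof (induction f rule: TP.induct)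
  case (mono c k)
  have "((\<lambda>t. c * (v t * cis (of_int k * t))) has_integral c * 0) {0..2*pi}"
    by (rule has_integral_mult_right[OF coef])
  then show ?case by (simp add: algebra_simps)
next
  case (add f g)
  have "((\<lambda>t. v t * f t + v t * g t) has_integral 0 + 0) {0..2*pi}"
    by (rule has_integral_add[OF add.IH])
  then show ?case by (simp add: algebra_simps)
qed

lemma bound_on_Icc:
  fixes v :: "real \<Rightarrow> 'a::real_normed_vector"
  assumes "continuous_on UNIV v"
  obtains M where "M \<ge> 0" "\<And>t. t \<in> {a..b} \<Longrightarrow> norm (v t) \<le> M"
proof -
  have "bounded (v ` {a..b})"
    by (rule compact_imp_bounded[OF compact_continuous_image[OF continuous_on_subset[OF assms] compact_Icc]]) simp
  then obtain M where M: "\<forall>x\<in>v ` {a..b}. norm x \<le> M" unfolding bounded_iff by blast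
  show ?thesis
    by (rule that[of "max M 0"]) (use M in \<open>auto intro: le_max_iff_disj[THEN iffD2]\<close>)
qed

theorem fourier_unique:
  fixes v :: "real \<Rightarrow> complex"
  assumes cont: "continuous_on UNIV v" and per: "\<And>t. v (t + 2*pi) = v t"
    and coef: "\<And>k::int. ((\<lambda>t. v t * cis (of_int k * t)) has_integral 0) {0..2*pi}"
  shows "v t = 0"
proof -
  obtain M where M0: "M \<ge> 0" and M: "\<And>t. t \<in> {0..2*pi} \<Longrightarrow> norm (v t) \<le> M"
    using bound_on_Icc[OF cont] by blast
  define g where "g t = (norm (v t))^2" for t
  have gcont: "continuous_on {0..2*pi} g"
    unfolding g_def by (intro continuous_intros continuous_on_subset[OF cont]) auto
  obtain I where I: "(g has_integral I) {0..2*pi}"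
    using integrable_continuous_real[OF gcont] by blast
  have Vc: "continuous_on (sphere 0 1) (\<lambda>z. v (Arg z))" by (rule V_cont[OF cont per])
  have bnd: "\<bar>I\<bar> \<le> 4 * pi * M * e" if e: "e > 0" for e
  proof -
    have c1: "continuous_on (sphere 0 1) (\<lambda>z. Re (v (Arg z)))" using Vc by (intro continuous_intros)
    have c2: "continuous_on (sphere 0 1) (\<lambda>z. Im (v (Arg z)))" using Vc by (intro continuous_intros)
    obtain p1 where p1: "real_polynomial_function p1" "\<And>z. z \<in> sphere 0 1 \<Longrightarrow> \<bar>Re (v (Arg z)) - p1 z\<bar> < e"
      using Stone_Weierstrass_real_polynomial_function[OF compact_sphere c1 e] by blast
    obtain p2 where p2: "real_polynomial_function p2" "\<And>z. z \<in> sphere 0 1 \<Longrightarrow> \<bar>Im (v (Arg z)) - p2 z\<bar> < e"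
      using Stone_Weierstrass_real_polynomial_function[OF compact_sphere c2 e] by blast
    define q where "q t = complex_of_real (p1 (cis t)) + (- \<i>) * complex_of_real (p2 (cis t))" for t
    have TPq: "TP q" unfolding q_def[abs_def]
      by (intro TP.add TP_poly p1(1) TP_mult[OF TP_const] p2(1))
    have qb: "norm (cnj (v t) - q t) \<le> 2 * e" for t
    proof -
      have s: "cis t \<in> sphere 0 1" by simp
      have a: "\<bar>Re (v t) - p1 (cis t)\<bar> < e" using p1(2)[OF s] Arg_cis_per[of v, OF per] by simp
      have b: "\<bar>Im (v t) - p2 (cis t)\<bar> < e" using p2(2)[OF s] Arg_cis_per[of v, OF per] by simp
      have "norm (cnj (v t) - q t) \<le> \<bar>Re (cnj (v t) - q t)\<bar> + \<bar>Im (cnj (v t) - q t)\<bar>" by (rule cmod_le)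
      also have "\<dots> = \<bar>Re (v t) - p1 (cis t)\<bar> + \<bar>Im (v t) - p2 (cis t)\<bar>"
        unfolding q_def by (simp add: abs_minus_commute)
      finally show ?thesis using a b by simp
    qed
    have i1: "((\<lambda>t. v t * cnj (v t)) has_integral of_real I) {0..2*pi}"
    proof -
      have eqf: "\<And>t. complex_of_real (g t) = v t * cnj (v t)" unfolding g_def by (rule complex_norm_square)
      have "((\<lambda>t. complex_of_real (g t)) has_integral complex_of_real I) {0..2*pi}"
        by (rule has_integral_of_real[OF I])
      then show ?thesis unfolding eqf .
    qed
    have i2: "((\<lambda>t. v t * q t) has_integral 0) {0..2*pi}" by (rule TP_int_zero[OF coef TPq])
    have i3: "((\<lambda>t. v t * (cnj (v t) - q t)) has_integral of_real I) {0..2*pi}"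
      using has_integral_diff[OF i1 i2] by (simp add: right_diff_distrib)
    have "norm (complex_of_real I) \<le> (M * (2 * e)) * Henstock_Kurzweil_Integration.content {0..2*pi}"
    proof (rule has_integral_bound_real[where S = "{}", OF _ _ i3])
      show "0 \<le> M * (2 * e)" using M0 e by simp
      fix t assume "t \<in> {0..2*pi} - {}"
      then have "norm (v t) \<le> M" using M by auto
      then show "norm (v t * (cnj (v t) - q t)) \<le> M * (2 * e)"
        unfolding norm_mult using qb[of t] M0 by (intro mult_mono) auto
    qed auto
    then show ?thesis by (simp add: algebra_simps)
  qed
  have "\<bar>I\<bar> \<le> 0"
  proof (rule field_le_epsilon)
    fix d :: real assume d: "d > 0"
    define e where "e = d / (4 * pi * M + 1)"
    have "4 * pi * M + 1 > 0" using M0 by (simp add: add_nonneg_pos)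
    then have e: "e > 0" unfolding e_def using d by simp
    have "4 * pi * M * e = (d * (4 * pi * M)) / (4 * pi * M + 1)" unfolding e_def by simp
    also have "\<dots> \<le> d"
      using \<open>4 * pi * M + 1 > 0\<close> d by (simp add: divide_le_eq)
    finally have "4 * pi * M * e \<le> d" .
    then show "\<bar>I\<bar> \<le> 0 + d" using bnd[OF e] by simp
  qed
  then have I0: "I = 0" by simp
  have gz: "g x = 0" if x: "x \<in> {0..2*pi}" for x
  proof (rule has_integral_0_cbox_imp_0[of 0 "2*pi" g x])
    show "continuous_on (cbox 0 (2 * pi)) g" using gcont by simp
    show "\<And>x. x \<in> box 0 (2 * pi) \<Longrightarrow> 0 \<le> g x" by (simp add: g_def)
    show "(g has_integral 0) (cbox 0 (2 * pi))" using I I0 by simp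
    show "box 0 (2 * pi) \<noteq> {}" using pi_gt_zero by (simp add: not_le)
    show "x \<in> cbox 0 (2 * pi)" using x by simp
  qed
  define k where "k = \<lfloor>t / (2*pi)\<rfloor>"
  define t0 where "t0 = t - of_int k * (2*pi)"
  have "of_int k \<le> t / (2*pi)" "t / (2*pi) < of_int k + 1" unfolding k_def by linarith+
  then have t0: "t0 \<in> {0..2*pi}" unfolding t0_def by (auto simp: field_simps)
  have "v t = v t0" unfolding t0_def using per_int[of v, OF per, of "t - of_int k * (2*pi)" k] by simp
  also have "\<dots> = 0" using gz[OF t0] unfolding g_def by simp
  finally show ?thesis .
qed


definition "cf f n = integral {0..2*pi} (\<lambda>t. complex_of_real (f t) * cis (of_int (-n) * t))"

lemma cf_has_integral:
  assumes "continuous_on UNIV f"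
  shows "((\<lambda>t. complex_of_real (f t) * cis (of_int (-n) * t)) has_integral cf f n) {0..2*pi}"
  unfolding cf_def
  by (rule integrable_integral, rule integrable_continuous_real)
     (intro continuous_intros continuous_on_subset[OF assms], auto)

lemma cf_ibp:
  fixes f f1 :: "real \<Rightarrow> real"
  assumes d: "\<And>t. (f has_real_derivative f1 t) (at t)" and c1: "continuous_on UNIV f1"
    and per: "f (2*pi) = f 0" and n: "n \<noteq> 0"
  shows "cf f n = cf f1 n / (\<i> * of_int n)"
proof -
  have cf0: "continuous_on UNIV f"
    using d by (intro continuous_at_imp_continuous_on) (auto intro: DERIV_isCont)
  define g where "g t = complex_of_real (f t) * cis (of_int (-n) * t)" for t
  define g' where "g' t = complex_of_real (f t) * (\<i> * of_int (-n) * cis (of_int (-n) * t))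
      + complex_of_real (f1 t) * cis (of_int (-n) * t)" for t
  have "(g' has_integral g (2*pi) - g 0) {0..2*pi}"
  proof (rule fundamental_theorem_of_calculus)
    fix x assume "x \<in> {0..2*pi}"
    show "(g has_vector_derivative g' x) (at x within {0..2*pi})"
      unfolding g_def g'_def
      by (intro has_vector_derivative_mult has_vector_derivative_of_real cis_int_deriv
            has_field_derivative_at_within[OF d])
  qed simp
  moreover have "g (2*pi) - g 0 = 0" unfolding g_def using per cis_int_2pi[of "-n"] by (simp add: mult.commute)
  ultimately have i1: "(g' has_integral 0) {0..2*pi}" by simp
  have i2: "((\<lambda>t. (\<i> * of_int (-n)) * (complex_of_real (f t) * cis (of_int (-n) * t))) has_integral
       (\<i> * of_int (-n)) * cf f n) {0..2*pi}"
    by (rule has_integral_mult_right[OF cf_has_integral[OF cf0]])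
  have "((\<lambda>t. g' t - (\<i> * of_int (-n)) * (complex_of_real (f t) * cis (of_int (-n) * t))) has_integral
       0 - (\<i> * of_int (-n)) * cf f n) {0..2*pi}"
    by (rule has_integral_diff[OF i1 i2])
  moreover have "(\<lambda>t. g' t - (\<i> * of_int (-n)) * (complex_of_real (f t) * cis (of_int (-n) * t)))
      = (\<lambda>t. complex_of_real (f1 t) * cis (of_int (-n) * t))"
    unfolding g'_def by (auto simp: algebra_simps)
  ultimately have "cf f1 n = 0 - (\<i> * of_int (-n)) * cf f n"
    unfolding cf_def by (simp add: integral_unique)
  then show ?thesis using n by (simp add: field_simps)
qed

lemma cf_bound:
  assumes "continuous_on UNIV f" "\<And>t. t \<in> {0..2*pi} \<Longrightarrow> \<bar>f t\<bar> \<le> B" "B \<ge> 0"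
  shows "norm (cf f n) \<le> B * (2*pi)"
proof -
  have "norm (cf f n) \<le> B * Henstock_Kurzweil_Integration.content {0..2*pi}"
    by (rule has_integral_bound_real[where S = "{}", OF _ _ cf_has_integral[OF assms(1)]])
       (use assms in \<open>auto simp: norm_mult\<close>)
  then show ?thesis by simp
qed


lemma int_inv_sq_summable: "(\<lambda>n::int. 1 / (of_int n)^2 :: real) summable_on UNIV"
proof -
  let ?f = "\<lambda>n::int. 1 / (of_int n)^2 :: real"
  have ns: "(\<lambda>n::nat. 1 / (real n)^2) summable_on UNIV"
    using inverse_power_summable[of 2, where 'a=real]
    by (intro summable_nonneg_imp_summable_on) (auto simp: divide_inverse)
  have s1: "?f summable_on (range int)"
    by (subst summable_on_reindex) (use ns in \<open>auto simp: o_def\<close>)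
  have inj2: "inj (\<lambda>n::nat. - int n)" by (auto intro: injI)
  have s2: "?f summable_on (range (\<lambda>n::nat. - int n))"
    by (subst summable_on_reindex[OF inj2]) (use ns in \<open>auto simp: o_def\<close>)
  have U: "UNIV = range int \<union> range (\<lambda>n::nat. - int n)"
  proof -
    have "x \<in> range int \<union> range (\<lambda>n::nat. - int n)" for x :: int
    proof (cases "x \<ge> 0")
      case True then have "x = int (nat x)" by simp
      then show ?thesis by blast
    next
      case False then have "x = - int (nat (- x))" by simp
      then show ?thesis by blast
    qed
    then show ?thesis by auto
  qed
  show ?thesis by (subst U) (rule summable_on_union[OF s1 s2])
qed

lemma deriv_shift_eq':
  assumes "\<And>t. (f has_real_derivative f' t) (at t)" and "\<And>t. f (t + c) = f t"
  shows "f' (t + c) = f' t"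
proof -
  have "((\<lambda>s. f (s + c)) has_real_derivative f' (t + c) * 1) (at t)"
    by (rule DERIV_chain2[OF assms(1)]) (auto intro!: derivative_eq_intros)
  then have "(f has_real_derivative f' (t + c)) (at t)" using assms(2) by simp
  then show ?thesis using assms(1) DERIV_unique by blast
qed

theorem fourier_C2:
  fixes u u1 u2 :: "real \<Rightarrow> real"
  assumes d0: "\<And>t. (u has_real_derivative u1 t) (at t)"
    and d1: "\<And>t. (u1 has_real_derivative u2 t) (at t)"
    and c2: "continuous_on UNIV u2" and per: "\<And>t. u (t + 2*pi) = u t"
  shows "((\<lambda>n. (cf u n / of_real (2*pi)) * cis (of_int n * x)) has_sum complex_of_real (u x)) UNIV"
proof -
  have c0: "continuous_on UNIV u" using d0 by (intro continuous_at_imp_continuous_on) (auto intro: DERIV_isCont)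
  have c1: "continuous_on UNIV u1" using d1 by (intro continuous_at_imp_continuous_on) (auto intro: DERIV_isCont)
  have per1: "u1 (t + 2*pi) = u1 t" for t by (rule deriv_shift_eq'[OF d0 per])
  define d where "d n = cf u n / of_real (2*pi)" for n
  obtain B where B0: "B \<ge> 0" and B: "\<And>t. t \<in> {0..2*pi} \<Longrightarrow> norm (u2 t) \<le> B"
    using bound_on_Icc[OF c2] by blast
  have dn: "norm (d n) \<le> B / (of_int n)^2" if n: "n \<noteq> 0" for n
  proof -
    have "cf u n = cf u1 n / (\<i> * of_int n)"
      by (rule cf_ibp[OF d0 c1 _ n]) (use per[of 0] in simp)
    also have "cf u1 n = cf u2 n / (\<i> * of_int n)"
      by (rule cf_ibp[OF d1 c2 _ n]) (use per1[of 0] in simp)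
    finally have e: "cf u n = - cf u2 n / (of_int n)^2" by (simp add: power2_eq_square field_simps)
    have "norm (cf u2 n) \<le> B * (2*pi)" by (rule cf_bound[OF c2 _ B0]) (use B in auto)
    then have "norm (cf u n) \<le> B * (2*pi) / (of_int n)^2"
      unfolding e using n by (simp add: norm_divide norm_power divide_right_mono)
    then show ?thesis unfolding d_def by (simp add: norm_divide field_simps)
  qed
  have dsum: "(\<lambda>n. norm (d n)) summable_on UNIV"
  proof (rule summable_on_comparison_test)
    show "(\<lambda>n. B * (1 / (of_int n)^2) + (if n = 0 then norm (d 0) else 0)) summable_on UNIV"
      by (intro summable_on_add summable_on_cmult_right int_inv_sq_summable)
         (rule finite_nonzero_values_imp_summable_on, auto)
    fix n :: int
    show "norm (d n) \<le> B * (1 / (of_int n)^2) + (if n = 0 then norm (d 0) else 0)"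
      using dn[of n] by (cases "n = 0") auto
  qed auto
  interpret fsyn d by unfold_locales (rule dsum)
  define v where "v t = complex_of_real (u t) - S t" for t
  have vc: "continuous_on UNIV v" unfolding v_def[abs_def]
    by (intro continuous_intros c0 S_cont)
  have Sper: "S (t + 2*pi) = S t" for t
  proof -
    have "cis (of_int n * (t + 2*pi)) = cis (of_int n * t)" for n :: int
      using cis_int_2pi[of n] by (simp add: distrib_left cis_mult[symmetric])
    then show ?thesis unfolding S_def by simp
  qed
  have vper: "v (t + 2*pi) = v t" for t unfolding v_def using per Sper by simp
  have coef: "((\<lambda>t. v t * cis (of_int k * t)) has_integral 0) {0..2*pi}" for k :: int
  proof -
    have i1: "((\<lambda>t. complex_of_real (u t) * cis (of_int k * t)) has_integral cf u (-k)) {0..2*pi}"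
      using cf_has_integral[OF c0, of "-k"] by simp
    have i2: "((\<lambda>t. S t * cis (of_int k * t)) has_integral cf u (-k)) {0..2*pi}"
      using S_coef[of "-k"] unfolding d_def by simp
    show ?thesis using has_integral_diff[OF i1 i2] unfolding v_def by (simp add: left_diff_distrib)
  qed
  have "v x = 0" by (rule fourier_unique[OF vc vper coef])
  then have "S x = complex_of_real (u x)" unfolding v_def by simp
  then show ?thesis using has_S[of x] unfolding d_def by simp
qed


context bill
begin

lemma shift_deriv:
  assumes "\<And>t. (f has_real_derivative f' t) (at t)"
  shows "((\<lambda>s. f (s + c)) has_real_derivative f' (t + c)) (at t)"
proof -
  have "((\<lambda>s. f (s + c)) has_real_derivative f' (t + c) * 1) (at t)"
    by (rule DERIV_chain2[OF assms]) (auto intro!: derivative_eq_intros)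
  then show ?thesis by simp
qed

lemma deriv_zero_on_ball:
  assumes df: "\<And>s. (f has_real_derivative f' s) (at s)"
    and z: "\<And>s. dist t s < e \<Longrightarrow> f s = 0"
    and s: "dist t s < e"
  shows "f' s = 0"
proof -
  have "((\<lambda>_. 0) has_real_derivative 0) (at s)" by simp
  then have "(f has_real_derivative 0) (at s)"
  proof (rule has_field_derivative_transform_within_open)
    show "open (ball t e)" by simp
    show "s \<in> ball t e" using s by simp
    show "\<And>x. x \<in> ball t e \<Longrightarrow> 0 = f x" using z by (simp add: dist_commute)
  qed
  then show ?thesis using df DERIV_unique by blast
qed

lemma sym_of_sq:
  assumes sq: "\<And>t. (h (t + pi))^2 = (h t)^2"
  shows "h (t + pi) = h t"
proof (rule ccontr)
  assume ne: "h (t + pi) \<noteq> h t"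
  define m where "m s = h s + h (s + pi)" for s
  define k where "k s = h s - h (s + pi)" for s
  have prod: "m s * k s = 0" for s
    unfolding m_def k_def using sq[of s] by (simp add: algebra_simps power2_eq_square)
  have kc: "continuous (at t) k" unfolding k_def[abs_def]
    by (intro continuous_intros h_isCont isCont_o2[OF _ h_isCont]) 
  have "k t \<noteq> 0" using ne unfolding k_def by simp
  then obtain e where e: "e > 0" "\<And>y. dist t y < e \<Longrightarrow> k y \<noteq> 0"
    using continuous_at_avoid[OF kc] by blast
  have mz: "dist t y < e \<Longrightarrow> m y = 0" for y using prod[of y] e(2)[of y] by simp
  have dm: "(m has_real_derivative (hh1 s + hh1 (s + pi))) (at s)" for s
    unfolding m_def[abs_def] by (intro derivative_intros h_deriv shift_deriv[OF h_deriv])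
  have dm1: "((\<lambda>s. hh1 s + hh1 (s + pi)) has_real_derivative (hh2 s + hh2 (s + pi))) (at s)" for s
    by (intro derivative_intros hh1_deriv shift_deriv[OF hh1_deriv])
  have m1z: "dist t y < e \<Longrightarrow> hh1 y + hh1 (y + pi) = 0" for y
    by (rule deriv_zero_on_ball[OF dm mz])
  have "hh2 t + hh2 (t + pi) = 0"
  proof (rule deriv_zero_on_ball[OF dm1 m1z])
    show "dist t t < e" using e(1) by (simp only: dist_self)
  qed
  moreover have "m t = 0" using mz e by simp
  ultimately have "kap t + kap (t + pi) = 0" unfolding kap_def m_def by simp
  then show False using kap_pos[of t] kap_pos[of "t + pi"] by simp
qed

lemma cis_quarter: assumes "n mod 4 = 2" shows "cis (of_int n * (pi/2)) = -1"
proof -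
  have n: "n = 4 * (n div 4) + 2" using assms by presburger
  have e: "of_int n * (pi/2) = of_int (n div 4) * (2*pi) + pi"
    by (subst n) (simp add: algebra_simps)
  have "cis (of_int n * (pi/2)) = cis (of_int (n div 4) * (2*pi)) * cis pi"
    unfolding e by (simp only: cis_mult)
  then show ?thesis by (simp add: cis_int_2pi)
qed

lemma quarter_cis: assumes "cis (of_int n * (pi/2)) = -1" shows "n mod 4 = 2"
proof -
  have "cis (of_int n * (pi/2)) = cis pi" using assms by simp
  then obtain k :: int where "of_int n * (pi/2) = pi + of_int k * (2*pi)" using cis_eq_imp by blast
  then have "of_int n * pi = (2 + 4 * of_int k) * pi" by (simp add: algebra_simps)
  then have "(of_int n :: real) = 2 + 4 * of_int k" by simp
  then have "n = 2 + 4 * k" by linarith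
  then show ?thesis by presburger
qed

lemma sq_const_deriv:
  assumes "\<And>s. (h s)^2 + (h (s + pi/2))^2 = C"
  shows "h a * hh1 a + h (a + pi/2) * hh1 (a + pi/2) = 0"
proof -
  have "((\<lambda>s. (h s)^2 + (h (s + pi/2))^2) has_real_derivative
      2 * h a * hh1 a + 2 * h (a + pi/2) * hh1 (a + pi/2)) (at a)"
    by (rule derivative_eq_intros h_deriv shift_deriv[OF h_deriv] refl | simp)+
  moreover have "(\<lambda>s. (h s)^2 + (h (s + pi/2))^2) = (\<lambda>_. C)" using assms by auto
  ultimately have "((\<lambda>_. C) has_real_derivative 2 * h a * hh1 a + 2 * h (a + pi/2) * hh1 (a + pi/2)) (at a)"
    by simp
  then have "2 * h a * hh1 a + 2 * h (a + pi/2) * hh1 (a + pi/2) = 0"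
    using DERIV_const DERIV_unique by blast
  then show ?thesis by simp
qed

lemma fourier_imp:
  assumes "fourier_cond h"
  shows "(\<forall>t. h (t + pi) = h t) \<and> (\<forall>a. h a * hh1 a + h (a + pi/2) * hh1 (a + pi/2) = 0)"
proof -
  obtain c0 c where H: "\<And>psi. ((\<lambda>n. c n * cis (of_int n * psi)) has_sum
      (complex_of_real ((h psi)^2) - c0)) {n::int. n mod 4 = 2}"
    using assms unfolding fourier_cond_def by blast
  have anti: "complex_of_real ((h (psi + pi/2))^2) - c0 = - (complex_of_real ((h psi)^2) - c0)" for psi
  proof -
    have "((\<lambda>n. c n * cis (of_int n * (psi + pi/2))) has_sum
      (complex_of_real ((h (psi + pi/2))^2) - c0)) {n::int. n mod 4 = 2}" by (rule H)
    moreover have "((\<lambda>n. c n * cis (of_int n * (psi + pi/2))) has_sum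
      - (complex_of_real ((h psi)^2) - c0)) {n::int. n mod 4 = 2}"
    proof -
      have "((\<lambda>n. - (c n * cis (of_int n * psi))) has_sum - (complex_of_real ((h psi)^2) - c0)) {n::int. n mod 4 = 2}"
        using H[of psi] by (simp add: has_sum_uminus)
      moreover have "- (c n * cis (of_int n * psi)) = c n * cis (of_int n * (psi + pi/2))"
        if "n \<in> {n::int. n mod 4 = 2}" for n
      proof -
        have "cis (of_int n * (psi + pi/2)) = cis (of_int n * psi) * cis (of_int n * (pi/2))"
          by (simp add: cis_mult distrib_left)
        then show ?thesis using cis_quarter[of n] that by simp
      qed
      ultimately show ?thesis using has_sum_cong by (metis (no_types, lifting))
    qed
    ultimately show ?thesis using has_sum_unique by blast
  qed
  define C where "C = 2 * Re c0"
  have sr: "(h s)^2 + (h (s + pi/2))^2 = C" for s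
    using arg_cong[OF anti[of s], of Re] unfolding C_def by simp
  have sq: "(h (t + pi))^2 = (h t)^2" for t
    using sr[of t] sr[of "t + pi/2"] by (simp add: add.assoc)
  show ?thesis using sym_of_sq[OF sq] sq_const_deriv[OF sr] by blast
qed

lemma fourier_of_cond:
  assumes cond: "\<And>a. h a * hh1 a + h (a + pi/2) * hh1 (a + pi/2) = 0"
  shows "fourier_cond h"
proof -
  define G where "G s = (h s)^2 + (h (s + pi/2))^2" for s
  have dG: "(G has_real_derivative 0) (at s)" for s
  proof -
    have "(G has_real_derivative 2 * (h s * hh1 s + h (s + pi/2) * hh1 (s + pi/2))) (at s)"
      unfolding G_def[abs_def]
      by (rule derivative_eq_intros h_deriv shift_deriv[OF h_deriv] refl | simp add: algebra_simps)+
    then show ?thesis using cond[of s] by simp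
  qed
  define C where "C = G 0"
  have GC: "G s = C" for s unfolding C_def using dG by (intro DERIV_isconst_all) auto
  define u where "u s = (h s)^2 - C/2" for s
  define u1 where "u1 s = 2 * h s * hh1 s" for s
  define u2 where "u2 s = 2 * (hh1 s)^2 + 2 * h s * hh2 s" for s
  have d0: "(u has_real_derivative u1 t) (at t)" for t
    unfolding u_def[abs_def] u1_def by (rule derivative_eq_intros h_deriv refl | simp)+
  have d1: "(u1 has_real_derivative u2 t) (at t)" for t
    unfolding u1_def[abs_def] u2_def
    by (rule derivative_eq_intros h_deriv hh1_deriv refl | simp add: power2_eq_square algebra_simps)+
  have c2: "continuous_on UNIV u2" unfolding u2_def[abs_def]
    by (intro continuous_at_imp_continuous_on ballI continuous_intros h_isCont hh1_isCont hh2_isCont)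
  have per: "u (t + 2*pi) = u t" for t unfolding u_def by (simp add: h_per)
  have anti: "u (s + pi/2) = - u s" for s using GC[of s] unfolding u_def G_def by simp
  define d where "d n = cf u n / of_real (2*pi)" for n
  have FS: "((\<lambda>n. d n * cis (of_int n * x)) has_sum complex_of_real (u x)) UNIV" for x
    unfolding d_def by (rule fourier_C2[OF d0 d1 c2 per])
  have dsum: "(\<lambda>n. norm (d n)) summable_on UNIV"
  proof -
    have "(\<lambda>n. d n) summable_on UNIV" using FS[of 0] has_sum_imp_summable by fastforce
    then show ?thesis using summable_on_iff_abs_summable_on_complex by blast
  qed
  define e where "e n = d n * (cis (of_int n * (pi/2)) + 1)" for n
  have esum: "(\<lambda>n. norm (e n)) summable_on UNIV"
  proof (rule summable_on_comparison_test)
    show "(\<lambda>n. 2 * norm (d n)) summable_on UNIV" by (intro summable_on_cmult_right dsum)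
    fix n :: int
    have "norm (cis (of_int n * (pi/2)) + 1) \<le> 2"
      using norm_triangle_ineq[of "cis (of_int n * (pi/2))" 1] by simp
    then show "norm (e n) \<le> 2 * norm (d n)"
      unfolding e_def norm_mult by (metis mult.commute mult_left_mono norm_ge_zero)
  qed auto
  interpret E: fsyn e by unfold_locales (rule esum)
  have e0: "((\<lambda>n. e n * cis (of_int n * x)) has_sum 0) UNIV" for x
  proof -
    have "((\<lambda>n. d n * cis (of_int n * (x + pi/2)) + d n * cis (of_int n * x)) has_sum
        (complex_of_real (u (x + pi/2)) + complex_of_real (u x))) UNIV"
      by (rule has_sum_add[OF FS FS])
    moreover have "d n * cis (of_int n * (x + pi/2)) + d n * cis (of_int n * x) = e n * cis (of_int n * x)" for n
      unfolding e_def by (simp add: cis_mult[symmetric] distrib_left algebra_simps)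
    ultimately show ?thesis using anti[of x] by simp
  qed
  have ez: "e m = 0" for m
  proof -
    have "E.S t = 0" for t using has_sum_unique[OF E.has_S e0] by blast
    then have "((\<lambda>t. 0) has_integral (of_real (2*pi) * e m)) {0..2*pi}"
      using E.S_coef[of m] by simp
    then have "of_real (2*pi) * e m = 0" using has_integral_0 has_integral_unique by blast
    then show ?thesis by simp
  qed
  have dz: "d n = 0" if "n \<notin> {n::int. n mod 4 = 2}" for n
  proof (rule ccontr)
    assume "d n \<noteq> 0"
    then have "cis (of_int n * (pi/2)) + 1 = 0" using ez[of n] unfolding e_def by simp
    then have "cis (of_int n * (pi/2)) = -1" by (simp only: eq_neg_iff_add_eq_0)
    then show False using quarter_cis that by blast
  qed
  have FS': "((\<lambda>n. d n * cis (of_int n * x)) has_sum complex_of_real (u x)) {n::int. n mod 4 = 2}" for x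
    using FS[of x] by (subst has_sum_cong_neutral[where T = UNIV]) (use dz in auto)
  show ?thesis unfolding fourier_cond_def
  proof (intro exI allI)
    fix psi
    show "((\<lambda>n. d n * cis (of_int n * psi)) has_sum
        (complex_of_real ((h psi)\<^sup>2) - complex_of_real (C/2))) {n. n mod 4 = 2}"
      using FS'[of psi] unfolding u_def by simp
  qed
qed

end

theorem proposition3p1:
  fixes h :: "real \<Rightarrow> real"
  assumes "C2_fun h" and "periodic_2pi h"
    and "\<forall>psi. h psi + deriv (deriv h) psi > 0"
  shows "((\<forall>psi. h (psi + pi) = h psi) \<and> has_rot_inv_curve_4 h) \<longleftrightarrow> fourier_cond h"
proof -
  interpret bill h by unfold_locales (use assms in auto)
  show ?thesis
  proof
    assume A: "(\<forall>psi. h (psi + pi) = h psi) \<and> has_rot_inv_curve_4 h"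
    interpret bill_sym h by unfold_locales (use A in auto)
    obtain F where F: "continuous_on UNIV F" "\<forall>psi. F (psi + 2 * pi) = F psi + 2 * pi"
      "\<forall>psi. psi < F psi \<and> F psi < psi + 2 * pi" "\<forall>psi. (F ^^ 4) psi = psi + 2 * pi"
      "\<forall>psi. reflects h psi (F psi) (F (F psi))"
      using A unfolding has_rot_inv_curve_4_def by blast
    interpret bill_F h F by unfold_locales (use F in auto)
    show "fourier_cond h" by (rule fourier_of_cond[OF cond_of_rot])
  next
    assume "fourier_cond h"
    then have B: "(\<forall>t. h (t + pi) = h t) \<and> (\<forall>a. h a * hh1 a + h (a + pi/2) * hh1 (a + pi/2) = 0)"
      by (rule fourier_imp)
    interpret bill_sym h by unfold_locales (use B in auto)
    show "(\<forall>psi. h (psi + pi) = h psi) \<and> has_rot_inv_curve_4 h"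
      using B rot_curve_of_cond by blast
  qed
qed

end
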